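(* Let $\mathcal T=(\mathcal S,\to)$ be a timed transition system of timed sort $\Sigma$ and $\mathcal V$ a valuation, and let $S\subseteq\mathcal S$ and a timed mu-calculus formula $\Phi$ in positive normal form be such that $S\subseteq[\![\Phi]\!]_{\mathcal V}$. Then the sequent $S\vdash^{\mathcal T}_{\mathcal V,\varepsilon}\Phi$ ($\varepsilon$ the empty definition list) has a successful timed tableau.
   Context: A timed sort is a set $\Sigma$ with $\mathbb R_{\ge0}\subseteq\Sigma$; $\mathrm{Var}$ is a countably infinite set of variables. A TTS is an LTS $(\mathcal S,\to)$, ${\to}\subseteq\mathcal S\times\Sigma\times\mathcal S$, such that for all $s,s',s''$ and $\delta,\delta'\ge0$: $s\xrightarrow{0}s$; $s\xrightarrow{\delta}s'$ and $s\xrightarrow{\delta}s''$ imply $s'=s''$; $s\xrightarrow{\delta}s'\xrightarrow{\delta'}s''$ implies $s\xrightarrow{\delta+\delta'}s''$; if $s\xrightarrow{\delta}s'$ and $\delta=\delta'+\delta''$ ($\delta',\delta''\ge0$) then $s\xrightarrow{\delta'}s''\xrightarrow{\delta''}s'$ for some $s''$. $s\xrightarrow{K}s'$ means $s\xrightarrow{a}s'$ for some $a\in K$. $\mathrm{succ}(s,\delta)$ is the unique $s'$ with $s\xrightarrow{\delta}s'$; $\mathrm{delays}(s)=\{\delta\ge0\mid\exists s'.\ s\xrightarrow{\delta}s'\}$; $\mathrm{succ}_<(s,\delta)=\{s'\mid\exists\delta'<\delta.\ s\xrightarrow{\delta'}s'\}$. Valuation $\mathcal V:\mathrm{Var}\to2^{\mathcal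 S}$. Timed formulas: $\Phi::=Z\mid\neg\Phi\mid\Phi_1\wedge\Phi_2\mid[K]\Phi\mid\forall_{\Phi_1}(\Phi_2)\mid\nu Z.\Phi$, with $Z$ positive in $\Phi$ in every $\nu Z.\Phi$. Derived: $\vee$, $\langle K\rangle\Phi=\neg[K]\neg\Phi$, $\mu Z.\Phi=\neg\nu Z.\neg\Phi[Z:=\neg Z]$, $\exists_{\Phi_1}(\Phi_2)=\neg\forall_{\neg\Phi_1}(\neg\Phi_2)$. Semantics: $[\![Z]\!]_{\mathcal V}=\mathcal V(Z)$, negation = complement, $\wedge$ = intersection, $[\![[K]\Phi]\!]_{\mathcal V}=\{s\mid\forall s'.\ s\xrightarrow{K}s'\Rightarrow s'\in[\![\Phi]\!]_{\mathcal V}\}$, $[\![\nu Z.\Phi]\!]_{\mathcal V}=\bigcup\{S'\mid S'\subseteq[\![\Phi]\!]_{\mathcal V[Z:=S']}\}$, $[\![\forall_{\Phi_1}(\Phi_2)]\!]_{\mathcal V}=\{s\mid\forall\delta\in\mathrm{delays}(s).\ \mathrm{succ}_<(s,\delta)\cap[\![\Phi_1]\!]_{\mathcal V}=\emptyset\Rightarrow\mathrm{succ}(s,\delta)\in[\![\Phi_2]\!]_{\mathcal V}\}$. Positive normal form: built from $Z,\neg Z,\wedge,\vee,[K],\langle K\rangle,\forall,\exists,\nu,\mu$. Definition lists $\Delta=(U_1=\Phi_1)\cdots(U_n=\Phi_n)$: distinct $U_i$, no $U_i$ bound in any $\Phi_j$, $U_j$ not free in $\Phi_i$ for $i\le j$.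 Sequent $S\vdash^{\mathcal T}_{\mathcal V,\Delta}\Phi$: $S\subseteq\mathcal S$, $\Phi$ in positive normal form, each $U\in\mathrm{dom}(\Delta)$ positive and not bound in $\Phi$. Rules (conclusion; premises): ($\wedge$) $S\vdash_\Delta\Phi_1\wedge\Phi_2$; $S\vdash_\Delta\Phi_1$, $S\vdash_\Delta\Phi_2$. ($\vee$) $S\vdash_\Delta\Phi_1\vee\Phi_2$; $S_1\vdash_\Delta\Phi_1$, $S_2\vdash_\Delta\Phi_2$, $S=S_1\cup S_2$. ($[K]$) $S\vdash_\Delta[K]\Phi$; $\{s'\mid\exists s\in S.\ s\xrightarrow{K}s'\}\vdash_\Delta\Phi$. ($\langle K\rangle$, witness $f:S\to\mathcal S$, $s\xrightarrow{K}f(s)$) $S\vdash_\Delta\langle K\rangle\Phi$; $f(S)\vdash_\Delta\Phi$. ($\sigma Z$) $S\vdash_\Delta\sigma Z.\Phi$; $S\vdash_{\Delta\cdot(U=\sigma Z.\Phi)}U$, $U$ fresh. (Un) $S\vdash_\Delta U$; $S\vdash_\Delta\Phi[Z:=U]$, $\Delta(U)=\sigma Z.\Phi$. (Thin) $S\vdash_\Delta\Phi$; $S'\vdash_\Delta\Phi$, $S\subseteq S'$. ($\exists$, $f:S\to\mathbb R_{\ge0}$, $f(s)\in\mathrm{delays}(s)$) $S\vdash_\Delta\exists_{\Phi_1}(\Phi_2)$; $f_<(S)\vdash_\Delta\Phi_1$, $f_=(S)\vdash_\Delta\Phi_2$, with $f_<(S)=\bigcup_{s\in S}\mathrm{succ}_<(s,f(s))$,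 $f_=(S)=\{\mathrm{succ}(s,f(s))\mid s\in S\}$. ($\forall$, $g$ with $g(s,\delta)\le\delta$ defined for all $s\in S$, $\delta\in\mathrm{delays}(s)$) $S\vdash_\Delta\forall_{\Phi_1}(\Phi_2)$; $g_<(S)\vdash_\Delta\Phi_1$, $g_=(S)\vdash_\Delta\Phi_2$, with $g_<(S)=\{\mathrm{succ}(s,g(s,\delta))\mid s\in S,\delta\in\mathrm{delays}(s),g(s,\delta)<\delta\}$ and $g_=(S)$ likewise with $g(s,\delta)=\delta$. A timed tableau is a finite nonempty ordered tree of nodes labelled by sequents over $\mathcal T,\mathcal V$, each internal node labelled by a rule application (plus $f$ or $g$ for $\langle K\rangle,\exists,\forall$) forming an instance of the rule with its ordered children, with root definition list empty and terminal leaves $n$ (sequent $S_n\vdash_\Delta\Phi$): (a) $\Phi\in\{Z,\neg Z\}$, $Z\notin\mathrm{dom}(\Delta)$; (b) $\Phi=\langle K\rangle\Psi$ and some $s\in S_n$ has no $K$-successor; (c) $\Phi=U\in\mathrm{dom}(\Delta)$ and some strict ancestor $m$ has formula $U$ with $S_n\subseteq S_m$ ($\mu$-/$\nu$-leaf according to $\Delta(U)$). Companion nodes: nodes with rule Un; companion leaves of $m$: leaves strictly below $m$ with the same formula and $S_n\subseteq S_m$, excluding companion leaves of companion nodes strictly below $m$. For a child $n'$ of $n$: $s'<_{n',n}s$ iff $s'\in S_{n'}$, $s\in S_n$ and: rule $[K]$, $s\xrightarrow{K}s'$; rule $(\langle K\rangle,f)$, $s'=f(s)$; rule $(\exists,f)$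 and ($n'$ first child, $s'\in\mathrm{succ}_<(s,f(s))$) or ($n'$ second child, $s'=\mathrm{succ}(s,f(s))$); rule $(\forall,g)$ and ($n'$ first child, $s'=\mathrm{succ}(s,g(s,\delta))$ for some $\delta\in\mathrm{delays}(s)$ with $g(s,\delta)<\delta$) or ($n'$ second child, same with $g(s,\delta)=\delta$); any other rule and $s'=s$. $\lessdot_{n',n}$ is least with $s\lessdot_{n,n}s$ and ($s'\lessdot_{n',m}s''$, $s''<_{m,n}s$)$\Rightarrow s'\lessdot_{n',n}s$. $<:_{n',n}$, $<:_m$ least with: $s'<:_m s$ iff some companion leaf $m'$ of $m$ has $s'\in S_{m'}$, $s'<:_{m',m}s$; $s'<:_{n',n}s$ iff $s'\in S_{n'}$, $s\in S_n$, and $s'\lessdot_{n',n}s$ or some companion node $m\notin\{n,n'\}$ and $t,t'\in S_m$ satisfy $s'<:_{n',m}t'$, $t'(<:_m)^+t$, $t\lessdot_{m,n}s$. A leaf is successful iff: formula $Z$ and $S_n\subseteq\mathcal V(Z)$; or $\neg Z$ and $S_n\cap\mathcal V(Z)=\emptyset$; or $\nu$-leaf; or $\mu$-leaf whose companion node $m$ has $<:_m$ well-founded. A timed tableau is successful iff all leaves are successful. *)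

theory Defs
  imports Complex_Main
begin

section \<open>Timed transition systems\<close>

text \<open>The timed sort Sigma is the type 'a; the embedding of the non-negative reals
  into Sigma is the field dly (required injective on the non-negative reals).
  States form the type 's (the state set is UNIV).\<close>

record ('s, 'a) tts =
  tr  :: "'s \<Rightarrow> 'a \<Rightarrow> 's \<Rightarrow> bool"
  dly :: "real \<Rightarrow> 'a"

definition is_TTS :: "('s, 'a) tts \<Rightarrow> bool" where
  "is_TTS T \<longleftrightarrow>
     inj_on (dly T) {0..} \<and>
     (\<forall>s. tr T s (dly T 0) s) \<and>
     (\<forall>s s' s'' \<delta>. 0 \<le> \<delta> \<longrightarrow> tr T s (dly T \<delta>) s' \<longrightarrow> tr T s (dly T \<delta>) s'' \<longrightarrow> s' = s'') \<and>
     (\<forall>s s' s'' \<delta> \<delta>'. 0 \<le> \<delta> \<longrightarrow> 0 \<le> \<delta>' \<longrightarrow> tr T s (dly T \<delta>) s' \<longrightarrow> tr T s' (dly T \<delta>') s''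
         \<longrightarrow> tr T s (dly T (\<delta> + \<delta>')) s'') \<and>
     (\<forall>s s' \<delta>' \<delta>''. 0 \<le> \<delta>' \<longrightarrow> 0 \<le> \<delta>'' \<longrightarrow> tr T s (dly T (\<delta>' + \<delta>'')) s'
         \<longrightarrow> (\<exists>s''. tr T s (dly T \<delta>') s'' \<and> tr T s'' (dly T \<delta>'') s'))"

definition ksucc :: "('s, 'a) tts \<Rightarrow> 's \<Rightarrow> 'a set \<Rightarrow> 's \<Rightarrow> bool" where
  "ksucc T s K s' \<longleftrightarrow> (\<exists>a\<in>K. tr T s a s')"

definition delays :: "('s, 'a) tts \<Rightarrow> 's \<Rightarrow> real set" where
  "delays T s = {\<delta>. 0 \<le> \<delta> \<and> (\<exists>s'. tr T s (dly T \<delta>) s')}"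

definition succ :: "('s, 'a) tts \<Rightarrow> 's \<Rightarrow> real \<Rightarrow> 's" where
  "succ T s \<delta> = (THE s'. tr T s (dly T \<delta>) s')"

definition succ_lt :: "('s, 'a) tts \<Rightarrow> 's \<Rightarrow> real \<Rightarrow> 's set" where
  "succ_lt T s \<delta> = {s'. \<exists>\<delta>'. 0 \<le> \<delta>' \<and> \<delta>' < \<delta> \<and> tr T s (dly T \<delta>') s'}"

section \<open>Core timed formulas and their semantics\<close>

datatype 'a cform =
    CVar nat
  | CNeg "'a cform"
  | CAnd "'a cform" "'a cform"
  | CBox "'a set" "'a cform"
  | CAll "'a cform" "'a cform"
  | CNu nat "'a cform"

fun pos :: "nat \<Rightarrow> 'a cform \<Rightarrow> bool" and neg :: "nat \<Rightarrow> 'a cform \<Rightarrow> bool" where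
  "pos Z (CVar Y) = True"
| "neg Z (CVar Y) = (Y \<noteq> Z)"
| "pos Z (CNeg \<phi>) = neg Z \<phi>"
| "neg Z (CNeg \<phi>) = pos Z \<phi>"
| "pos Z (CAnd \<phi> \<psi>) = (pos Z \<phi> \<and> pos Z \<psi>)"
| "neg Z (CAnd \<phi> \<psi>) = (neg Z \<phi> \<and> neg Z \<psi>)"
| "pos Z (CBox K \<phi>) = pos Z \<phi>"
| "neg Z (CBox K \<phi>) = neg Z \<phi>"
| "pos Z (CAll \<phi> \<psi>) = (pos Z \<phi> \<and> pos Z \<psi>)"
| "neg Z (CAll \<phi> \<psi>) = (neg Z \<phi> \<and> neg Z \<psi>)"
| "pos Z (CNu Y \<phi>) = (Y = Z \<or> pos Z \<phi>)"
| "neg Z (CNu Y \<phi>) = (Y = Z \<or> neg Z \<phi>)"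

fun wf_cform :: "'a cform \<Rightarrow> bool" where
  "wf_cform (CVar Z) = True"
| "wf_cform (CNeg \<phi>) = wf_cform \<phi>"
| "wf_cform (CAnd \<phi> \<psi>) = (wf_cform \<phi> \<and> wf_cform \<psi>)"
| "wf_cform (CBox K \<phi>) = wf_cform \<phi>"
| "wf_cform (CAll \<phi> \<psi>) = (wf_cform \<phi> \<and> wf_cform \<psi>)"
| "wf_cform (CNu Z \<phi>) = (pos Z \<phi> \<and> wf_cform \<phi>)"

fun csubst :: "nat \<Rightarrow> 'a cform \<Rightarrow> 'a cform \<Rightarrow> 'a cform" where
  "csubst Z t (CVar Y) = (if Y = Z then t else CVar Y)"
| "csubst Z t (CNeg \<phi>) = CNeg (csubst Z t \<phi>)"
| "csubst Z t (CAnd \<phi> \<psi>) = CAnd (csubst Z t \<phi>) (csubst Z t \<psi>)"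
| "csubst Z t (CBox K \<phi>) = CBox K (csubst Z t \<phi>)"
| "csubst Z t (CAll \<phi> \<psi>) = CAll (csubst Z t \<phi>) (csubst Z t \<psi>)"
| "csubst Z t (CNu Y \<phi>) = (if Y = Z then CNu Y \<phi> else CNu Y (csubst Z t \<phi>))"

fun sem :: "('s, 'a) tts \<Rightarrow> (nat \<Rightarrow> 's set) \<Rightarrow> 'a cform \<Rightarrow> 's set" where
  "sem T V (CVar Z) = V Z"
| "sem T V (CNeg \<phi>) = - sem T V \<phi>"
| "sem T V (CAnd \<phi> \<psi>) = sem T V \<phi> \<inter> sem T V \<psi>"
| "sem T V (CBox K \<phi>) = {s. \<forall>s'. ksucc T s K s' \<longrightarrow> s' \<in> sem T V \<phi>}"
| "sem T V (CAll \<phi> \<psi>) =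
     {s. \<forall>\<delta>\<in>delays T s. succ_lt T s \<delta> \<inter> sem T V \<phi> = {} \<longrightarrow> succ T s \<delta> \<in> sem T V \<psi>}"
| "sem T V (CNu Z \<phi>) = \<Union>{S'. S' \<subseteq> sem T (V(Z := S')) \<phi>}"

datatype 'a pform =
    PVar nat
  | PNegVar nat
  | PAnd "'a pform" "'a pform"
  | POr "'a pform" "'a pform"
  | PBox "'a set" "'a pform"
  | PDia "'a set" "'a pform"
  | PAll "'a pform" "'a pform"
  | PEx "'a pform" "'a pform"
  | PNu nat "'a pform"
  | PMu nat "'a pform"

fun to_core :: "'a pform \<Rightarrow> 'a cform" where
  "to_core (PVar Z) = CVar Z"
| "to_core (PNegVar Z) = CNeg (CVar Z)"
| "to_core (PAnd \<phi> \<psi>) = CAnd (to_core \<phi>) (to_core \<psi>)"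
| "to_core (POr \<phi> \<psi>) = CNeg (CAnd (CNeg (to_core \<phi>)) (CNeg (to_core \<psi>)))"
| "to_core (PBox K \<phi>) = CBox K (to_core \<phi>)"
| "to_core (PDia K \<phi>) = CNeg (CBox K (CNeg (to_core \<phi>)))"
| "to_core (PAll \<phi> \<psi>) = CAll (to_core \<phi>) (to_core \<psi>)"
| "to_core (PEx \<phi> \<psi>) = CNeg (CAll (CNeg (to_core \<phi>)) (CNeg (to_core \<psi>)))"
| "to_core (PNu Z \<phi>) = CNu Z (to_core \<phi>)"
| "to_core (PMu Z \<phi>) = CNeg (CNu Z (CNeg (csubst Z (CNeg (CVar Z)) (to_core \<phi>))))"

fun fvars :: "'a pform \<Rightarrow> nat set" where
  "fvars (PVar Z) = {Z}"
| "fvars (PNegVar Z) = {Z}"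
| "fvars (PAnd \<phi> \<psi>) = fvars \<phi> \<union> fvars \<psi>"
| "fvars (POr \<phi> \<psi>) = fvars \<phi> \<union> fvars \<psi>"
| "fvars (PBox K \<phi>) = fvars \<phi>"
| "fvars (PDia K \<phi>) = fvars \<phi>"
| "fvars (PAll \<phi> \<psi>) = fvars \<phi> \<union> fvars \<psi>"
| "fvars (PEx \<phi> \<psi>) = fvars \<phi> \<union> fvars \<psi>"
| "fvars (PNu Z \<phi>) = fvars \<phi> - {Z}"
| "fvars (PMu Z \<phi>) = fvars \<phi> - {Z}"

fun bvars :: "'a pform \<Rightarrow> nat set" where
  "bvars (PVar Z) = {}"
| "bvars (PNegVar Z) = {}"
| "bvars (PAnd \<phi> \<psi>) = bvars \<phi> \<union> bvars \<psi>"
| "bvars (POr \<phi> \<psi>) = bvars \<phi> \<union> bvars \<psi>"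
| "bvars (PBox K \<phi>) = bvars \<phi>"
| "bvars (PDia K \<phi>) = bvars \<phi>"
| "bvars (PAll \<phi> \<psi>) = bvars \<phi> \<union> bvars \<psi>"
| "bvars (PEx \<phi> \<psi>) = bvars \<phi> \<union> bvars \<psi>"
| "bvars (PNu Z \<phi>) = insert Z (bvars \<phi>)"
| "bvars (PMu Z \<phi>) = insert Z (bvars \<phi>)"

fun psubst :: "nat \<Rightarrow> nat \<Rightarrow> 'a pform \<Rightarrow> 'a pform" where
  "psubst Z U (PVar Y) = PVar (if Y = Z then U else Y)"
| "psubst Z U (PNegVar Y) = PNegVar (if Y = Z then U else Y)"
| "psubst Z U (PAnd \<phi> \<psi>) = PAnd (psubst Z U \<phi>) (psubst Z U \<psi>)"
| "psubst Z U (POr \<phi> \<psi>) = POr (psubst Z U \<phi>) (psubst Z U \<psi>)"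
| "psubst Z U (PBox K \<phi>) = PBox K (psubst Z U \<phi>)"
| "psubst Z U (PDia K \<phi>) = PDia K (psubst Z U \<phi>)"
| "psubst Z U (PAll \<phi> \<psi>) = PAll (psubst Z U \<phi>) (psubst Z U \<psi>)"
| "psubst Z U (PEx \<phi> \<psi>) = PEx (psubst Z U \<phi>) (psubst Z U \<psi>)"
| "psubst Z U (PNu Y \<phi>) = (if Y = Z then PNu Y \<phi> else PNu Y (psubst Z U \<phi>))"
| "psubst Z U (PMu Y \<phi>) = (if Y = Z then PMu Y \<phi> else PMu Y (psubst Z U \<phi>))"

fun boxK :: "'a pform \<Rightarrow> 'a set" where
  "boxK (PBox K \<phi>) = K"
| "boxK _ = {}"

type_synonym 'a deflist = "(nat \<times> 'a pform) list"

definition wf_deflist :: "'a deflist \<Rightarrow> bool" where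
  "wf_deflist D \<longleftrightarrow>
     distinct (map fst D) \<and>
     (\<forall>i<length D. \<forall>j<length D. fst (D ! i) \<notin> bvars (snd (D ! j))) \<and>
     (\<forall>i j. i \<le> j \<longrightarrow> j < length D \<longrightarrow> fst (D ! j) \<notin> fvars (snd (D ! i)))"

definition wf_sequent :: "'a deflist \<Rightarrow> 'a pform \<Rightarrow> bool" where
  "wf_sequent D \<Phi> \<longleftrightarrow> wf_deflist D \<and>
     (\<forall>U\<in>fst ` set D. pos U (to_core \<Phi>) \<and> U \<notin> bvars \<Phi>)"

definition fresh :: "nat \<Rightarrow> 'a deflist \<Rightarrow> 'a pform \<Rightarrow> bool" where
  "fresh U D \<Phi> \<longleftrightarrow> U \<notin> fvars \<Phi> \<union> bvars \<Phi> \<and> U \<notin> fst ` set D \<and>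
     (\<forall>d\<in>set D. U \<notin> fvars (snd d) \<union> bvars (snd d))"

section \<open>Timed tableaux\<close>

datatype ('s, 'a) rl =
    R_And | R_Or | R_Box | R_Dia "'s \<Rightarrow> 's" | R_Fix | R_Un | R_Thin
  | R_Ex "'s \<Rightarrow> real" | R_All "'s \<Rightarrow> real \<Rightarrow> real"

datatype ('s, 'a) tab =
  TNode (tS: "'s set") (tD: "'a deflist") (tF: "'a pform") (tR: "('s, 'a) rl option")
        (tC: "('s, 'a) tab list")

definition seq_of :: "('s, 'a) tab \<Rightarrow> 's set \<times> 'a deflist \<times> 'a pform" where
  "seq_of t = (tS t, tD t, tF t)"

definition rule_ok :: "('s, 'a) tts \<Rightarrow> ('s, 'a) rl \<Rightarrow> 's set \<Rightarrow> 'a deflist \<Rightarrow> 'a pform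
     \<Rightarrow> ('s set \<times> 'a deflist \<times> 'a pform) list \<Rightarrow> bool" where
  "rule_ok T r S D \<Phi> cs \<longleftrightarrow>
   (case r of
      R_And \<Rightarrow> (\<exists>\<phi> \<psi>. \<Phi> = PAnd \<phi> \<psi> \<and> cs = [(S, D, \<phi>), (S, D, \<psi>)])
    | R_Or \<Rightarrow> (\<exists>\<phi> \<psi> S1 S2. \<Phi> = POr \<phi> \<psi> \<and> S = S1 \<union> S2 \<and> cs = [(S1, D, \<phi>), (S2, D, \<psi>)])
    | R_Box \<Rightarrow> (\<exists>K \<psi>. \<Phi> = PBox K \<psi> \<and> cs = [({s'. \<exists>s\<in>S. ksucc T s K s'}, D, \<psi>)])
    | R_Dia f \<Rightarrow> (\<exists>K \<psi>. \<Phi> = PDia K \<psi> \<and> (\<forall>s\<in>S. ksucc T s K (f s)) \<and> cs = [(f ` S, D, \<psi>)])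
    | R_Fix \<Rightarrow> (\<exists>Z \<psi> U. (\<Phi> = PNu Z \<psi> \<or> \<Phi> = PMu Z \<psi>) \<and> fresh U D \<Phi> \<and>
                 cs = [(S, D @ [(U, \<Phi>)], PVar U)])
    | R_Un \<Rightarrow> (\<exists>U Z \<psi>. \<Phi> = PVar U \<and>
                 (map_of D U = Some (PNu Z \<psi>) \<or> map_of D U = Some (PMu Z \<psi>)) \<and>
                 cs = [(S, D, psubst Z U \<psi>)])
    | R_Thin \<Rightarrow> (\<exists>S'. S \<subseteq> S' \<and> cs = [(S', D, \<Phi>)])
    | R_Ex f \<Rightarrow> (\<exists>\<phi> \<psi>. \<Phi> = PEx \<phi> \<psi> \<and> (\<forall>s\<in>S. f s \<in> delays T s) \<and>
                 cs = [(\<Union>s\<in>S. succ_lt T s (f s), D, \<phi>), ((\<lambda>s. succ T s (f s)) ` S, D, \<psi>)])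
    | R_All g \<Rightarrow> (\<exists>\<phi> \<psi>. \<Phi> = PAll \<phi> \<psi> \<and>
                 (\<forall>s\<in>S. \<forall>\<delta>\<in>delays T s. 0 \<le> g s \<delta> \<and> g s \<delta> \<le> \<delta>) \<and>
                 cs = [({succ T s (g s \<delta>) | s \<delta>. s \<in> S \<and> \<delta> \<in> delays T s \<and> g s \<delta> < \<delta>}, D, \<phi>),
                       ({succ T s (g s \<delta>) | s \<delta>. s \<in> S \<and> \<delta> \<in> delays T s \<and> g s \<delta> = \<delta>}, D, \<psi>)]))"

fun subt :: "('s, 'a) tab \<Rightarrow> nat list \<Rightarrow> ('s, 'a) tab option" where
  "subt t [] = Some t"
| "subt t (i # p) = (if i < length (tC t) then subt (tC t ! i) p else None)"

definition valid :: "('s, 'a) tab \<Rightarrow> nat list \<Rightarrow> bool" where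
  "valid t p \<longleftrightarrow> subt t p \<noteq> None"

definition nS :: "('s, 'a) tab \<Rightarrow> nat list \<Rightarrow> 's set" where "nS t p = tS (the (subt t p))"
definition nD :: "('s, 'a) tab \<Rightarrow> nat list \<Rightarrow> 'a deflist" where "nD t p = tD (the (subt t p))"
definition nF :: "('s, 'a) tab \<Rightarrow> nat list \<Rightarrow> 'a pform" where "nF t p = tF (the (subt t p))"
definition nR :: "('s, 'a) tab \<Rightarrow> nat list \<Rightarrow> ('s, 'a) rl option" where "nR t p = tR (the (subt t p))"
definition nC :: "('s, 'a) tab \<Rightarrow> nat list \<Rightarrow> ('s, 'a) tab list" where "nC t p = tC (the (subt t p))"

text \<open>below m n: n is strictly below m (m is a strict ancestor of n).\<close>
definition below :: "nat list \<Rightarrow> nat list \<Rightarrow> bool" where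
  "below m n \<longleftrightarrow> (\<exists>q. q \<noteq> [] \<and> n = m @ q)"

definition is_leaf :: "('s, 'a) tab \<Rightarrow> nat list \<Rightarrow> bool" where
  "is_leaf t p \<longleftrightarrow> valid t p \<and> nC t p = []"

definition terminal :: "('s, 'a) tts \<Rightarrow> ('s, 'a) tab \<Rightarrow> nat list \<Rightarrow> bool" where
  "terminal T t n \<longleftrightarrow>
     (\<exists>Z. (nF t n = PVar Z \<or> nF t n = PNegVar Z) \<and> Z \<notin> fst ` set (nD t n)) \<or>
     (\<exists>K \<psi>. nF t n = PDia K \<psi> \<and> (\<exists>s\<in>nS t n. \<not> (\<exists>s'. ksucc T s K s'))) \<or>
     (\<exists>U. nF t n = PVar U \<and> U \<in> fst ` set (nD t n) \<and>
        (\<exists>m. below m n \<and> nF t m = PVar U \<and> nS t n \<subseteq> nS t m))"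

definition is_tableau :: "('s, 'a) tts \<Rightarrow> ('s, 'a) tab \<Rightarrow> bool" where
  "is_tableau T t \<longleftrightarrow> tD t = [] \<and>
     (\<forall>p. valid t p \<longrightarrow> wf_sequent (nD t p) (nF t p) \<and>
        (if nC t p = [] then nR t p = None \<and> terminal T t p
         else (\<exists>r. nR t p = Some r \<and> rule_ok T r (nS t p) (nD t p) (nF t p) (map seq_of (nC t p)))))"

definition comp_node :: "('s, 'a) tab \<Rightarrow> nat list \<Rightarrow> bool" where
  "comp_node t m \<longleftrightarrow> valid t m \<and> nR t m = Some R_Un"

function comp_leaf :: "('s, 'a) tab \<Rightarrow> nat list \<Rightarrow> nat list \<Rightarrow> bool" where
  "comp_leaf t m n \<longleftrightarrow>
     is_leaf t n \<and> below m n \<and> nF t n = nF t m \<and> nS t n \<subseteq> nS t m \<and>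
     \<not> (\<exists>m'. if below m m' \<and> below m' n then comp_node t m' \<and> comp_leaf t m' n else False)"
  by auto
termination
  by (relation "measure (\<lambda>(t, m, n). length n - length m)") (auto simp: below_def)

text \<open>tstep T t n i s' s: s' <_{n@[i], n} s.\<close>
definition tstep :: "('s, 'a) tts \<Rightarrow> ('s, 'a) tab \<Rightarrow> nat list \<Rightarrow> nat \<Rightarrow> 's \<Rightarrow> 's \<Rightarrow> bool" where
  "tstep T t n i s' s \<longleftrightarrow> valid t (n @ [i]) \<and> s' \<in> nS t (n @ [i]) \<and> s \<in> nS t n \<and>
     (case nR t n of
        Some R_Box \<Rightarrow> ksucc T s (boxK (nF t n)) s'
      | Some (R_Dia f) \<Rightarrow> s' = f s
      | Some (R_Ex f) \<Rightarrow> (if i = 0 then s' \<in> succ_lt T s (f s) else s' = succ T s (f s))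
      | Some (R_All g) \<Rightarrow> (\<exists>\<delta>\<in>delays T s. s' = succ T s (g s \<delta>) \<and>
                             (if i = 0 then g s \<delta> < \<delta> else g s \<delta> = \<delta>))
      | _ \<Rightarrow> s' = s)"

text \<open>ttrace T t n' n s' s: s' \<lessdot>_{n',n} s.\<close>
inductive ttrace :: "('s, 'a) tts \<Rightarrow> ('s, 'a) tab \<Rightarrow> nat list \<Rightarrow> nat list \<Rightarrow> 's \<Rightarrow> 's \<Rightarrow> bool"
  for T t where
  refl: "ttrace T t n n s s"
| step: "ttrace T t n' (n @ [i]) s' s'' \<Longrightarrow> tstep T t n i s'' s \<Longrightarrow> ttrace T t n' n s' s"

lemma mono_tranclp_aux[mono]: "(\<And>a b. x a b \<longrightarrow> y a b) \<Longrightarrow> x\<^sup>+\<^sup>+ a b \<longrightarrow> y\<^sup>+\<^sup>+ a b"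
proof
  assume h: "\<And>a b. x a b \<longrightarrow> y a b" and "x\<^sup>+\<^sup>+ a b"
  from \<open>x\<^sup>+\<^sup>+ a b\<close> show "y\<^sup>+\<^sup>+ a b"
    by (induct rule: tranclp_induct) (use h in \<open>auto intro: tranclp.trancl_into_trancl\<close>)
qed

text \<open>cm T t m s' s: s' <:_m s;  ctr T t n' n s' s: s' <:_{n',n} s.\<close>
inductive cm :: "('s, 'a) tts \<Rightarrow> ('s, 'a) tab \<Rightarrow> nat list \<Rightarrow> 's \<Rightarrow> 's \<Rightarrow> bool"
  and ctr :: "('s, 'a) tts \<Rightarrow> ('s, 'a) tab \<Rightarrow> nat list \<Rightarrow> nat list \<Rightarrow> 's \<Rightarrow> 's \<Rightarrow> bool"
  for T t where
  cm_intro: "comp_node t m \<Longrightarrow> comp_leaf t m m' \<Longrightarrow> s' \<in> nS t m' \<Longrightarrow> ctr T t m' m s' s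
             \<Longrightarrow> cm T t m s' s"
| ctr_trace: "valid t n' \<Longrightarrow> valid t n \<Longrightarrow> s' \<in> nS t n' \<Longrightarrow> s \<in> nS t n \<Longrightarrow> ttrace T t n' n s' s
             \<Longrightarrow> ctr T t n' n s' s"
| ctr_comp: "valid t n' \<Longrightarrow> valid t n \<Longrightarrow> s' \<in> nS t n' \<Longrightarrow> s \<in> nS t n \<Longrightarrow>
             comp_node t m \<Longrightarrow> m \<noteq> n \<Longrightarrow> m \<noteq> n' \<Longrightarrow> u \<in> nS t m \<Longrightarrow> u' \<in> nS t m \<Longrightarrow>
             ctr T t n' m s' u' \<Longrightarrow> (cm T t m)\<^sup>+\<^sup>+ u' u \<Longrightarrow> ttrace T t m n u s
             \<Longrightarrow> ctr T t n' n s' s"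


definition successful_leaf :: "('s, 'a) tts \<Rightarrow> (nat \<Rightarrow> 's set) \<Rightarrow> ('s, 'a) tab \<Rightarrow> nat list \<Rightarrow> bool" where
  "successful_leaf T V t n \<longleftrightarrow>
     (\<exists>Z. nF t n = PVar Z \<and> Z \<notin> fst ` set (nD t n) \<and> nS t n \<subseteq> V Z) \<or>
     (\<exists>Z. nF t n = PNegVar Z \<and> Z \<notin> fst ` set (nD t n) \<and> nS t n \<inter> V Z = {}) \<or>
     (\<exists>U Z \<psi>. nF t n = PVar U \<and> map_of (nD t n) U = Some (PNu Z \<psi>)) \<comment> \<open>nu-leaf\<close> \<or>
     (\<exists>U Z \<psi>. nF t n = PVar U \<and> map_of (nD t n) U = Some (PMu Z \<psi>) \<and>
        (\<exists>m. comp_node t m \<and> comp_leaf t m n \<and> wfP (cm T t m)))  \<comment> \<open>mu-leaf\<close>"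

definition successful :: "('s, 'a) tts \<Rightarrow> (nat \<Rightarrow> 's set) \<Rightarrow> ('s, 'a) tab \<Rightarrow> bool" where
  "successful T V t \<longleftrightarrow> (\<forall>n. is_leaf t n \<longrightarrow> successful_leaf T V t n)"

end

theory Submission
  imports Defs
begin



section \<open>Semantics of positive normal forms\<close>

abbreviation psem :: "('s, 'a) tts \<Rightarrow> (nat \<Rightarrow> 's set) \<Rightarrow> 'a pform \<Rightarrow> 's set" where
  "psem T W \<phi> \<equiv> sem T W (to_core \<phi>)"

lemma sem_csubst_neg:
  "sem T W (csubst Y (CNeg (CVar Y)) c) = sem T (W(Y := - W Y)) c"
proof (induction c arbitrary: W)
  case (CNu X c)
  show ?case
  proof (cases "X = Y")
    case True then show ?thesis by (simp del: fun_upd_apply)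
  next
    case False
    have "\<And>S'. sem T (W(X := S')) (csubst Y (CNeg (CVar Y)) c) = sem T (W(Y := - W Y, X := S')) c"
    proof -
      fix S'
      have e: "(W(X := S'))(Y := - (W(X := S')) Y) = W(Y := - W Y, X := S')"
        using False by (auto simp: fun_eq_iff)
      show "sem T (W(X := S')) (csubst Y (CNeg (CVar Y)) c) = sem T (W(Y := - W Y, X := S')) c"
        using CNu.IH[of "W(X := S')"] unfolding e .
    qed
    then show ?thesis using False by (simp del: fun_upd_apply)
  qed
qed auto

lemma psem_PVar[simp]: "psem T W (PVar Z) = W Z" by simp
lemma psem_PNegVar[simp]: "psem T W (PNegVar Z) = - W Z" by simp
lemma psem_PAnd[simp]: "psem T W (PAnd \<phi> \<psi>) = psem T W \<phi> \<inter> psem T W \<psi>" by simp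
lemma psem_POr[simp]: "psem T W (POr \<phi> \<psi>) = psem T W \<phi> \<union> psem T W \<psi>" by simp
lemma psem_PBox[simp]: "psem T W (PBox K \<phi>) = {s. \<forall>s'. ksucc T s K s' \<longrightarrow> s' \<in> psem T W \<phi>}" by simp
lemma psem_PDia[simp]: "psem T W (PDia K \<phi>) = {s. \<exists>s'. ksucc T s K s' \<and> s' \<in> psem T W \<phi>}" by auto
lemma psem_PAll[simp]: "psem T W (PAll \<phi> \<psi>) =
     {s. \<forall>\<delta>\<in>delays T s. succ_lt T s \<delta> \<inter> psem T W \<phi> = {} \<longrightarrow> succ T s \<delta> \<in> psem T W \<psi>}" by simp
lemma psem_PEx[simp]: "psem T W (PEx \<phi> \<psi>) =
     {s. \<exists>\<delta>\<in>delays T s. succ_lt T s \<delta> \<subseteq> psem T W \<phi> \<and> succ T s \<delta> \<in> psem T W \<psi>}" by auto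
lemma psem_PNu[simp]: "psem T W (PNu Z \<phi>) = gfp (\<lambda>X. psem T (W(Z := X)) \<phi>)"
  by (simp add: gfp_def Sup_set_def)
lemma psem_PMu[simp]: "psem T W (PMu Z \<phi>) = lfp (\<lambda>X. psem T (W(Z := X)) \<phi>)"
proof -
  have "psem T W (PMu Z \<phi>) = - \<Union>{S'. S' \<subseteq> - psem T (W(Z := - S')) \<phi>}"
    by (simp add: sem_csubst_neg)
  also have "\<dots> = lfp (\<lambda>X. psem T (W(Z := X)) \<phi>)"
    unfolding lfp_def
  proof (rule set_eqI, rule iffI)
    fix x assume x: "x \<in> - \<Union>{S'. S' \<subseteq> - psem T (W(Z := - S')) \<phi>}"
    show "x \<in> \<Inter>{u. psem T (W(Z := u)) \<phi> \<subseteq> u}"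
    proof
      fix u assume "u \<in> {u. psem T (W(Z := u)) \<phi> \<subseteq> u}"
      then have "- u \<subseteq> - psem T (W(Z := - (- u))) \<phi>" by auto
      then show "x \<in> u" using x by blast
    qed
  next
    fix x assume x: "x \<in> \<Inter>{u. psem T (W(Z := u)) \<phi> \<subseteq> u}"
    show "x \<in> - \<Union>{S'. S' \<subseteq> - psem T (W(Z := - S')) \<phi>}"
    proof
      assume "x \<in> \<Union>{S'. S' \<subseteq> - psem T (W(Z := - S')) \<phi>}"
      then obtain S' where "S' \<subseteq> - psem T (W(Z := - S')) \<phi>" "x \<in> S'" by blast
      then have "psem T (W(Z := - S')) \<phi> \<subseteq> - S'" "x \<notin> - S'" by auto
      then show False using x by blast
    qed
  qed
  finally show ?thesis .
qed

declare to_core.simps[simp del]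

lemma psem_fupd_irrel:
  "U \<notin> fvars \<phi> \<Longrightarrow> psem T (W(U := X)) \<phi> = psem T W \<phi>"
proof (induction \<phi> arbitrary: W)
  case (PNu Y \<phi>)
  show ?case
  proof (cases "Y = U")
    case True then show ?thesis by (simp del: fun_upd_apply)
  next
    case False
    then have "\<And>S. psem T (W(U := X, Y := S)) \<phi> = psem T (W(Y := S)) \<phi>"
      using PNu.IH[of "W(Y := _)"] PNu.prems by (simp add: fun_upd_twist del: fun_upd_apply)
    then show ?thesis by (simp del: fun_upd_apply)
  qed
next
  case (PMu Y \<phi>)
  show ?case
  proof (cases "Y = U")
    case True then show ?thesis by (simp del: fun_upd_apply)
  next
    case False
    then have "\<And>S. psem T (W(U := X, Y := S)) \<phi> = psem T (W(Y := S)) \<phi>"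
      using PMu.IH[of "W(Y := _)"] PMu.prems by (simp add: fun_upd_twist del: fun_upd_apply)
    then show ?thesis by (simp del: fun_upd_apply)
  qed
qed auto

lemma psem_psubst:
  "U \<notin> bvars \<phi> \<Longrightarrow> psem T W (psubst Z U \<phi>) = psem T (W(Z := W U)) \<phi>"
proof (induction \<phi> arbitrary: W)
  case (PNu Y \<phi>)
  show ?case
  proof (cases "Y = Z")
    case True then show ?thesis by (simp del: fun_upd_apply)
  next
    case False
    with PNu have "Y \<noteq> U" by auto
    have "\<And>S. psem T (W(Y := S)) (psubst Z U \<phi>) = psem T (W(Z := W U, Y := S)) \<phi>"
    proof -
      fix S
      have e2: "(W(Y := S))(Z := (W(Y := S)) U) = W(Z := W U, Y := S)"
        using `Y \<noteq> U` False by (auto simp: fun_eq_iff)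
      show "psem T (W(Y := S)) (psubst Z U \<phi>) = psem T (W(Z := W U, Y := S)) \<phi>"
        using PNu.IH[of "W(Y := S)"] PNu.prems unfolding e2 by (simp del: fun_upd_apply)
    qed
    with False show ?thesis by (simp del: fun_upd_apply)
  qed
next
  case (PMu Y \<phi>)
  show ?case
  proof (cases "Y = Z")
    case True then show ?thesis by (simp del: fun_upd_apply)
  next
    case False
    with PMu have "Y \<noteq> U" by auto
    have "\<And>S. psem T (W(Y := S)) (psubst Z U \<phi>) = psem T (W(Z := W U, Y := S)) \<phi>"
    proof -
      fix S
      have e2: "(W(Y := S))(Z := (W(Y := S)) U) = W(Z := W U, Y := S)"
        using `Y \<noteq> U` False by (auto simp: fun_eq_iff)
      show "psem T (W(Y := S)) (psubst Z U \<phi>) = psem T (W(Z := W U, Y := S)) \<phi>"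
        using PMu.IH[of "W(Y := S)"] PMu.prems unfolding e2 by (simp del: fun_upd_apply)
    qed
    with False show ?thesis by (simp del: fun_upd_apply)
  qed
qed auto

fun fpos :: "'a pform \<Rightarrow> nat set" where
  "fpos (PVar Z) = {Z}"
| "fpos (PNegVar Z) = {}"
| "fpos (PAnd \<phi> \<psi>) = fpos \<phi> \<union> fpos \<psi>"
| "fpos (POr \<phi> \<psi>) = fpos \<phi> \<union> fpos \<psi>"
| "fpos (PBox K \<phi>) = fpos \<phi>"
| "fpos (PDia K \<phi>) = fpos \<phi>"
| "fpos (PAll \<phi> \<psi>) = fpos \<phi> \<union> fpos \<psi>"
| "fpos (PEx \<phi> \<psi>) = fpos \<phi> \<union> fpos \<psi>"
| "fpos (PNu Z \<phi>) = fpos \<phi> - {Z}"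
| "fpos (PMu Z \<phi>) = fpos \<phi> - {Z}"

fun fneg :: "'a pform \<Rightarrow> nat set" where
  "fneg (PVar Z) = {}"
| "fneg (PNegVar Z) = {Z}"
| "fneg (PAnd \<phi> \<psi>) = fneg \<phi> \<union> fneg \<psi>"
| "fneg (POr \<phi> \<psi>) = fneg \<phi> \<union> fneg \<psi>"
| "fneg (PBox K \<phi>) = fneg \<phi>"
| "fneg (PDia K \<phi>) = fneg \<phi>"
| "fneg (PAll \<phi> \<psi>) = fneg \<phi> \<union> fneg \<psi>"
| "fneg (PEx \<phi> \<psi>) = fneg \<phi> \<union> fneg \<psi>"
| "fneg (PNu Z \<phi>) = fneg \<phi> - {Z}"
| "fneg (PMu Z \<phi>) = fneg \<phi> - {Z}"

fun pwf :: "'a pform \<Rightarrow> bool" where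
  "pwf (PVar Z) = True"
| "pwf (PNegVar Z) = True"
| "pwf (PAnd \<phi> \<psi>) = (pwf \<phi> \<and> pwf \<psi>)"
| "pwf (POr \<phi> \<psi>) = (pwf \<phi> \<and> pwf \<psi>)"
| "pwf (PBox K \<phi>) = pwf \<phi>"
| "pwf (PDia K \<phi>) = pwf \<phi>"
| "pwf (PAll \<phi> \<psi>) = (pwf \<phi> \<and> pwf \<psi>)"
| "pwf (PEx \<phi> \<psi>) = (pwf \<phi> \<and> pwf \<psi>)"
| "pwf (PNu Z \<phi>) = (Z \<notin> fneg \<phi> \<and> pwf \<phi>)"
| "pwf (PMu Z \<phi>) = (Z \<notin> fneg \<phi> \<and> pwf \<phi>)"

lemma posneg_csubst_other:
  "X \<noteq> Y \<Longrightarrow> (pos X (csubst Y (CNeg (CVar Y)) c) = pos X c) \<and> (neg X (csubst Y (CNeg (CVar Y)) c) = neg X c)"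
  by (induction c) auto

lemma posneg_csubst_same:
  "(neg Y (csubst Y (CNeg (CVar Y)) c) = pos Y c) \<and> (pos Y (csubst Y (CNeg (CVar Y)) c) = neg Y c)"
  by (induction c) auto

lemma wf_csubst: "wf_cform (csubst Y (CNeg (CVar Y)) c) = wf_cform c"
  by (induction c) (auto simp: posneg_csubst_other)

lemma pos_to_core: "(pos X (to_core \<phi>) = (X \<notin> fneg \<phi>)) \<and> (neg X (to_core \<phi>) = (X \<notin> fpos \<phi>))"
proof (induction \<phi>)
  case (PMu Y \<phi>)
  then show ?case
    by (cases "X = Y") (auto simp: to_core.simps posneg_csubst_other)
qed (auto simp: to_core.simps)

lemma wf_to_core: "wf_cform (to_core \<phi>) = pwf \<phi>"
  by (induction \<phi>) (auto simp: to_core.simps posneg_csubst_same wf_csubst pos_to_core)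

section \<open>Monotonicity\<close>

lemma psem_mono_aux:
  "X \<subseteq> Y \<Longrightarrow> (Z \<notin> fneg \<phi> \<longrightarrow> psem T (W(Z := X)) \<phi> \<subseteq> psem T (W(Z := Y)) \<phi>) \<and>
                 (Z \<notin> fpos \<phi> \<longrightarrow> psem T (W(Z := Y)) \<phi> \<subseteq> psem T (W(Z := X)) \<phi>)"
proof (induction \<phi> arbitrary: W)
  case (PAll \<phi> \<psi>)
  then show ?case by (simp; blast)
next
  case (PEx \<phi> \<psi>)
  then show ?case by (simp; blast)
next
  case (PNu Y' \<phi>)
  show ?case
  proof (cases "Y' = Z")
    case True then show ?thesis by (simp del: fun_upd_apply)
  next
    case False
    have "\<And>S. (Z \<notin> fneg \<phi> \<longrightarrow> psem T (W(Y' := S, Z := X)) \<phi> \<subseteq> psem T (W(Y' := S, Z := Y)) \<phi>) \<and>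
              (Z \<notin> fpos \<phi> \<longrightarrow> psem T (W(Y' := S, Z := Y)) \<phi> \<subseteq> psem T (W(Y' := S, Z := X)) \<phi>)"
      using PNu by blast
    with False show ?thesis
      by (auto simp: fun_upd_twist simp del: fun_upd_apply intro!: gfp_mono)
  qed
next
  case (PMu Y' \<phi>)
  show ?case
  proof (cases "Y' = Z")
    case True then show ?thesis by (simp del: fun_upd_apply)
  next
    case False
    have "\<And>S. (Z \<notin> fneg \<phi> \<longrightarrow> psem T (W(Y' := S, Z := X)) \<phi> \<subseteq> psem T (W(Y' := S, Z := Y)) \<phi>) \<and>
              (Z \<notin> fpos \<phi> \<longrightarrow> psem T (W(Y' := S, Z := Y)) \<phi> \<subseteq> psem T (W(Y' := S, Z := X)) \<phi>)"
      using PMu by blast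
    with False show ?thesis
      by (auto simp: fun_upd_twist simp del: fun_upd_apply intro!: lfp_mono)
  qed
qed (simp; blast)+

lemma psem_mono:
  "Z \<notin> fneg \<phi> \<Longrightarrow> mono (\<lambda>X. psem T (W(Z := X)) \<phi>)"
  using psem_mono_aux by (metis monoI)




section \<open>A well-order on state sets\<close>

definition Wo :: "('s set \<times> 's set) set" where
  "Wo = (SOME r. Well_order r \<and> Field r = UNIV)"

definition Rw :: "('s set \<times> 's set) set" where
  "Rw = Wo - Id"

lemma Wo_prop: "Well_order (Wo :: ('s set \<times> 's set) set) \<and> Field (Wo :: ('s set \<times> 's set) set) = UNIV"
  unfolding Wo_def by (rule someI_ex) (rule well_ordering)

lemma Rw_wf: "wf Rw"
  using Wo_prop unfolding Rw_def well_order_on_def by blast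

lemma Rw_irrefl: "(a, a) \<notin> Rw"
  unfolding Rw_def by auto

lemma Rw_total: "a \<noteq> b \<Longrightarrow> (a, b) \<in> Rw \<or> (b, a) \<in> Rw"
proof -
  assume ab: "a \<noteq> b"
  have w: "Well_order (Wo :: ('s set \<times> 's set) set)" and f: "Field (Wo :: ('s set \<times> 's set) set) = UNIV"
    using Wo_prop by auto
  from w have "total_on (Field Wo) Wo" unfolding well_order_on_def linear_order_on_def by (elim conjE)
  then have "(a, b) \<in> Wo \<or> (b, a) \<in> Wo" using ab f unfolding total_on_def by (metis UNIV_I)
  then show ?thesis using ab unfolding Rw_def by simp
qed

lemma Rw_trans: "trans Rw"
proof (rule transI)
  fix a b c assume ab: "(a, b) \<in> Rw" and bc: "(b, c) \<in> Rw"
  have tr: "trans Wo" and an: "antisym Wo"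
    using Wo_prop unfolding well_order_on_def linear_order_on_def partial_order_on_def preorder_on_def
    by auto
  from ab bc have "(a, b) \<in> Wo" "(b, c) \<in> Wo" "a \<noteq> b" "b \<noteq> c" unfolding Rw_def by auto
  then have "(a, c) \<in> Wo" using tr by (meson transD)
  moreover have "a \<noteq> c"
  proof
    assume "a = c"
    with \<open>(b, c) \<in> Wo\<close> \<open>(a, b) \<in> Wo\<close> an \<open>a \<noteq> b\<close> show False by (auto dest: antisymD)
  qed
  ultimately show "(a, c) \<in> Rw" unfolding Rw_def by auto
qed

section \<open>Approximant stages\<close>

definition stg :: "('s set \<Rightarrow> 's set) \<Rightarrow> 's set \<Rightarrow> 's set" where
  "stg F = wfrec Rw (\<lambda>rec \<alpha>. \<Union>{F (rec \<beta>) | \<beta>. (\<beta>, \<alpha>) \<in> Rw})"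

lemma stg_eq: "stg F \<alpha> = \<Union>{F (stg F \<beta>) | \<beta>. (\<beta>, \<alpha>) \<in> Rw}"
proof -
  have "stg F \<alpha> = (\<lambda>rec \<alpha>. \<Union>{F (rec \<beta>) | \<beta>. (\<beta>, \<alpha>) \<in> Rw}) (cut (stg F) Rw \<alpha>) \<alpha>"
    unfolding stg_def by (rule wfrec[OF Rw_wf])
  also have "\<dots> = \<Union>{F (stg F \<beta>) | \<beta>. (\<beta>, \<alpha>) \<in> Rw}"
    by (intro arg_cong[where f = Union] Collect_cong) (metis cut_apply)
  finally show ?thesis .
qed

lemma stg_elim: "s \<in> stg F \<alpha> \<Longrightarrow> \<exists>\<beta>. (\<beta>, \<alpha>) \<in> Rw \<and> s \<in> F (stg F \<beta>)"
proof -
  assume a: "s \<in> stg F \<alpha>"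
  have "s \<in> \<Union>{F (stg F \<beta>) | \<beta>. (\<beta>, \<alpha>) \<in> Rw}"
    using a unfolding stg_eq[of F \<alpha>] .
  then obtain X where X: "X \<in> {F (stg F \<beta>) | \<beta>. (\<beta>, \<alpha>) \<in> Rw}" "s \<in> X" by (rule UnionE)
  from X(1) obtain \<beta> where "(\<beta>, \<alpha>) \<in> Rw" "X = F (stg F \<beta>)" by (auto simp only: mem_Collect_eq)
  with X(2) show ?thesis by (intro exI[of _ \<beta>]) simp
qed

lemma stg_sub: "(\<alpha>, \<beta>) \<in> Rw \<Longrightarrow> F (stg F \<alpha>) \<subseteq> stg F \<beta>"
proof -
  assume a: "(\<alpha>, \<beta>) \<in> Rw"
  have "F (stg F \<alpha>) \<subseteq> \<Union>{F (stg F \<gamma>) | \<gamma>. (\<gamma>, \<beta>) \<in> Rw}"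
    using a by (intro Union_upper) (auto simp only: mem_Collect_eq)
  then show ?thesis unfolding stg_eq[of F \<beta>] .
qed

lemma no_inj_Pow: "\<not> inj (e :: 'b set \<Rightarrow> 'b)"
proof
  assume inj: "inj e"
  define g where "g = inv e"
  have g: "\<And>A. g (e A) = A" unfolding g_def using inj by simp
  define D where "D = {x. x \<notin> g x}"
  have "e D \<in> D \<longleftrightarrow> e D \<notin> g (e D)" unfolding D_def by simp
  then show False using g[of D] by simp
qed

lemma stg_closed: "\<exists>\<alpha>. F (stg F \<alpha>) \<subseteq> stg F \<alpha>"
proof (rule ccontr)
  assume "\<not> ?thesis"
  then have ex: "\<And>\<alpha>. \<exists>x. x \<in> F (stg F \<alpha>) \<and> x \<notin> stg F \<alpha>" by (simp add: subset_iff)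
  define e where "e \<alpha> = (SOME x. x \<in> F (stg F \<alpha>) \<and> x \<notin> stg F \<alpha>)" for \<alpha>
  have e: "e \<alpha> \<in> F (stg F \<alpha>) \<and> e \<alpha> \<notin> stg F \<alpha>" for \<alpha>
    unfolding e_def by (rule someI_ex) (rule ex)
  have lt: "(\<alpha>, \<beta>) \<in> Rw \<Longrightarrow> e \<alpha> \<noteq> e \<beta>" for \<alpha> \<beta>
  proof -
    assume "(\<alpha>, \<beta>) \<in> Rw"
    then have "F (stg F \<alpha>) \<subseteq> stg F \<beta>" by (rule stg_sub)
    moreover have "e \<alpha> \<in> F (stg F \<alpha>)" using e[of \<alpha>] by (rule conjunct1)
    ultimately have "e \<alpha> \<in> stg F \<beta>" by (rule subsetD)
    moreover have "e \<beta> \<notin> stg F \<beta>" using e[of \<beta>] by (rule conjunct2)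
    ultimately show ?thesis by metis
  qed
  have "inj e"
  proof (rule injI)
    fix a b assume eq: "e a = e b"
    show "a = b"
    proof (rule ccontr)
      assume "a \<noteq> b"
      then have "(a, b) \<in> Rw \<or> (b, a) \<in> Rw" by (rule Rw_total)
      then show False using lt eq by metis
    qed
  qed
  then show False using no_inj_Pow by blast
qed

lemma lfp_stg: "s \<in> lfp F \<Longrightarrow> \<exists>\<alpha>. s \<in> stg F \<alpha>"
proof -
  assume s: "s \<in> lfp F"
  obtain \<alpha> where "F (stg F \<alpha>) \<subseteq> stg F \<alpha>" using stg_closed[of F] by (elim exE)
  then have "lfp F \<subseteq> stg F \<alpha>" by (rule lfp_lowerbound)
  with s have "s \<in> stg F \<alpha>" by (rule subsetD[rotated])
  then show ?thesis by (rule exI)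
qed

section \<open>Lexicographic order\<close>

fun lexl :: "('b \<times> 'b) set \<Rightarrow> 'b list \<Rightarrow> 'b list \<Rightarrow> bool" where
  "lexl R (a # as) (b # bs) = (length as = length bs \<and> ((a, b) \<in> R \<or> (a = b \<and> lexl R as bs)))"
| "lexl R _ _ = False"

definition lexle :: "('b \<times> 'b) set \<Rightarrow> 'b list \<Rightarrow> 'b list \<Rightarrow> bool" where
  "lexle R a b \<longleftrightarrow> a = b \<or> lexl R a b"

lemma lexl_len: "lexl R a b \<Longrightarrow> length a = length b"
  by (induction R a b rule: lexl.induct) auto

lemma lexl_trans: "trans R \<Longrightarrow> lexl R a b \<Longrightarrow> lexl R b c \<Longrightarrow> lexl R a c"
proof (induction a arbitrary: b c)
  case Nil then show ?case by simp
next
  case (Cons x a)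
  then obtain y b' where b: "b = y # b'" by (cases b) auto
  with Cons obtain z c' where c: "c = z # c'" by (cases c) auto
  show ?case using Cons b c by (auto dest: transD)
qed

lemma lexl_irrefl: "(\<forall>x. (x, x) \<notin> R) \<Longrightarrow> \<not> lexl R a a"
  by (induction a) auto

lemma lexl_total: "(\<forall>x y. x \<noteq> y \<longrightarrow> (x, y) \<in> R \<or> (y, x) \<in> R) \<Longrightarrow> length a = length b \<Longrightarrow> a \<noteq> b
   \<Longrightarrow> lexl R a b \<or> lexl R b a"
proof (induction a arbitrary: b)
  case Nil then show ?case by simp
next
  case (Cons x a)
  then obtain y b' where b: "b = y # b'" by (cases b) auto
  show ?case using Cons b by (cases "x = y") auto
qed

lemma lexl_lex: "lexl R a b \<Longrightarrow> (a, b) \<in> lex R"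
  by (induction R a b rule: lexl.induct) auto

lemma lexl_wf: "wf R \<Longrightarrow> wf {(a, b). lexl R a b}"
  by (rule wf_subset[OF wf_lex[of R]]) (auto intro: lexl_lex)

lemma lexl_take: "lexl R a b \<Longrightarrow> take k a = take k b \<or> lexl R (take k a) (take k b)"
proof (induction R a b arbitrary: k rule: lexl.induct)
  case (1 R x a y b)
  show ?case
  proof (cases k)
    case 0 then show ?thesis by simp
  next
    case (Suc k')
    then show ?thesis using 1 by auto
  qed
qed auto

lemma lexle_take: "lexle R a b \<Longrightarrow> lexle R (take k a) (take k b)"
  unfolding lexle_def using lexl_take by metis

lemma lexl_append_left: "lexl R a b \<Longrightarrow> length c = length d \<Longrightarrow> lexl R (a @ c) (b @ d)"
  by (induction R a b rule: lexl.induct) auto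

lemma lexl_append_same: "lexl R c d \<Longrightarrow> lexl R (a @ c) (a @ d)"
  by (induction a) (auto dest: lexl_len)

lemma lexl_snoc: "(x, y) \<in> R \<Longrightarrow> lexl R (a @ [x]) (a @ [y])"
  by (rule lexl_append_same) simp

lemma lexle_refl[simp]: "lexle R a a"
  unfolding lexle_def by simp

lemma lexle_trans: "trans R \<Longrightarrow> lexle R a b \<Longrightarrow> lexle R b c \<Longrightarrow> lexle R a c"
  unfolding lexle_def using lexl_trans by metis

lemma lexle_lexl_trans: "trans R \<Longrightarrow> lexle R a b \<Longrightarrow> lexl R b c \<Longrightarrow> lexl R a c"
  unfolding lexle_def using lexl_trans by metis

lemma lexl_lexle_trans: "trans R \<Longrightarrow> lexl R a b \<Longrightarrow> lexle R b c \<Longrightarrow> lexl R a c"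
  unfolding lexle_def using lexl_trans by metis

lemma lexl_lexle: "lexl R a b \<Longrightarrow> lexle R a b"
  unfolding lexle_def by simp

abbreviation LL :: "'s set list \<Rightarrow> 's set list \<Rightarrow> bool" where "LL \<equiv> lexl Rw"
abbreviation LE :: "'s set list \<Rightarrow> 's set list \<Rightarrow> bool" where "LE \<equiv> lexle Rw"

lemma LL_trans: "LL a b \<Longrightarrow> LL b c \<Longrightarrow> LL a c" using lexl_trans[OF Rw_trans] by blast
lemma LE_trans: "LE a b \<Longrightarrow> LE b c \<Longrightarrow> LE a c" using lexle_trans[OF Rw_trans] by blast
lemma LE_LL_trans: "LE a b \<Longrightarrow> LL b c \<Longrightarrow> LL a c" using lexle_lexl_trans[OF Rw_trans] by blast
lemma LL_LE_trans: "LL a b \<Longrightarrow> LE b c \<Longrightarrow> LL a c" using lexl_lexle_trans[OF Rw_trans] by blast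
lemma LL_irrefl: "\<not> LL a a" using lexl_irrefl[of Rw] Rw_irrefl by blast
lemma LL_total: "length a = length b \<Longrightarrow> a \<noteq> b \<Longrightarrow> LL a b \<or> LL b a"
  using lexl_total[of Rw] Rw_total by blast
lemma LL_wf: "wf {(a, b). LL a b}" using lexl_wf[OF Rw_wf] .

lemma LE_antisym: "LE a b \<Longrightarrow> LE b a \<Longrightarrow> a = b"
  unfolding lexle_def using LL_trans LL_irrefl by blast

lemma LE_append_take: "LE (a @ c) (b @ d) \<Longrightarrow> length a = length b \<Longrightarrow> LE a b"
  using lexle_take[of Rw "a @ c" "b @ d" "length a"] by simp

section \<open>Valuations for definition lists\<close>

fun upd :: "('s, 'a) tts \<Rightarrow> (nat \<Rightarrow> 's set) \<Rightarrow> nat \<times> 'a pform \<Rightarrow> 's set \<Rightarrow> (nat \<Rightarrow> 's set)" where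
  "upd T W (U, PNu Z \<psi>) \<alpha> = W(U := gfp (\<lambda>X. psem T (W(Z := X)) \<psi>))"
| "upd T W (U, PMu Z \<psi>) \<alpha> = W(U := stg (\<lambda>X. psem T (W(Z := X)) \<psi>) \<alpha>)"
| "upd T W (U, _) \<alpha> = W"

fun valf :: "('s, 'a) tts \<Rightarrow> (nat \<Rightarrow> 's set) \<Rightarrow> 'a deflist \<Rightarrow> 's set list \<Rightarrow> (nat \<Rightarrow> 's set)" where
  "valf T W (d # D) (\<alpha> # \<tau>) = valf T (upd T W d \<alpha>) D \<tau>"
| "valf T W _ _ = W"

lemma upd_other: "U \<noteq> fst d \<Longrightarrow> upd T W d \<alpha> U = W U"
  by (cases "(T, W, d, \<alpha>)" rule: upd.cases) auto

lemma valf_other: "U \<notin> fst ` set D \<Longrightarrow> valf T W D \<tau> U = W U"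
proof (induction T W D \<tau> rule: valf.induct)
  case (1 T W d D \<alpha> \<tau>)
  then show ?case by (simp add: upd_other)
qed auto

lemma valf_append: "length \<tau>1 = length D1 \<Longrightarrow> valf T W (D1 @ D2) (\<tau>1 @ \<tau>2) = valf T (valf T W D1 \<tau>1) D2 \<tau>2"
proof (induction D1 arbitrary: W \<tau>1)
  case Nil then show ?case by simp
next
  case (Cons d D1)
  then obtain \<alpha> \<tau>1' where "\<tau>1 = \<alpha> # \<tau>1'" by (cases \<tau>1) auto
  with Cons show ?case by simp
qed

lemma valf_snoc: "length \<tau> = length D \<Longrightarrow> valf T W (D @ [d]) (\<tau> @ [\<alpha>]) = upd T (valf T W D \<tau>) d \<alpha>"
  by (simp add: valf_append)

definition sat :: "('s, 'a) tts \<Rightarrow> (nat \<Rightarrow> 's set) \<Rightarrow> 'a deflist \<Rightarrow> 'a pform \<Rightarrow> 's set list \<Rightarrow> 's \<Rightarrow> bool" where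
  "sat T V D \<phi> \<tau> s \<longleftrightarrow> length \<tau> = length D \<and> s \<in> psem T (valf T V D \<tau>) \<phi>"

definition sig :: "('s, 'a) tts \<Rightarrow> (nat \<Rightarrow> 's set) \<Rightarrow> 'a deflist \<Rightarrow> 'a pform \<Rightarrow> 's \<Rightarrow> 's set list" where
  "sig T V D \<phi> s = (if \<exists>\<tau>. sat T V D \<phi> \<tau> s
     then (SOME \<tau>. sat T V D \<phi> \<tau> s \<and> (\<forall>\<tau>'. LL \<tau>' \<tau> \<longrightarrow> \<not> sat T V D \<phi> \<tau>' s))
     else replicate (length D) undefined)"

lemma sig_ex: "sat T V D \<phi> \<tau> s \<Longrightarrow> \<exists>\<tau>m. sat T V D \<phi> \<tau>m s \<and> (\<forall>\<tau>'. LL \<tau>' \<tau>m \<longrightarrow> \<not> sat T V D \<phi> \<tau>' s)"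
proof -
  assume "sat T V D \<phi> \<tau> s"
  then have "\<tau> \<in> {\<tau>. sat T V D \<phi> \<tau> s}" by simp
  then obtain z where z: "z \<in> {\<tau>. sat T V D \<phi> \<tau> s}"
    and m: "\<And>y. (y, z) \<in> {(a, b). LL a b} \<Longrightarrow> y \<notin> {\<tau>. sat T V D \<phi> \<tau> s}"
    using wfE_min[OF LL_wf] by metis
  have "sat T V D \<phi> z s" using z by simp
  moreover have "\<forall>\<tau>'. LL \<tau>' z \<longrightarrow> \<not> sat T V D \<phi> \<tau>' s"
  proof (intro allI impI)
    fix \<tau>' assume "LL \<tau>' z"
    then have "(\<tau>', z) \<in> {(a, b). LL a b}" by simp
    from m[OF this] show "\<not> sat T V D \<phi> \<tau>' s" by simp
  qed
  ultimately show ?thesis by (intro exI conjI)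
qed

lemma sig_props:
  assumes "sat T V D \<phi> \<tau> s"
  shows "sat T V D \<phi> (sig T V D \<phi> s) s" "LE (sig T V D \<phi> s) \<tau>"
proof -
  have ex: "\<exists>\<tau>m. sat T V D \<phi> \<tau>m s \<and> (\<forall>\<tau>'. LL \<tau>' \<tau>m \<longrightarrow> \<not> sat T V D \<phi> \<tau>' s)"
    using sig_ex[OF assms] .
  have sg: "sig T V D \<phi> s = (SOME \<tau>. sat T V D \<phi> \<tau> s \<and> (\<forall>\<tau>'. LL \<tau>' \<tau> \<longrightarrow> \<not> sat T V D \<phi> \<tau>' s))"
    unfolding sig_def using assms by auto
  have P: "sat T V D \<phi> (sig T V D \<phi> s) s \<and> (\<forall>\<tau>'. LL \<tau>' (sig T V D \<phi> s) \<longrightarrow> \<not> sat T V D \<phi> \<tau>' s)"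
    unfolding sg by (rule someI_ex[OF ex])
  then show "sat T V D \<phi> (sig T V D \<phi> s) s" by blast
  show "LE (sig T V D \<phi> s) \<tau>"
  proof (cases "sig T V D \<phi> s = \<tau>")
    case True then show ?thesis by simp
  next
    case False
    have "length (sig T V D \<phi> s) = length \<tau>" using P assms unfolding sat_def by simp
    with False LL_total have "LL (sig T V D \<phi> s) \<tau> \<or> LL \<tau> (sig T V D \<phi> s)" by blast
    moreover have "\<not> LL \<tau> (sig T V D \<phi> s)" using P assms by blast
    ultimately show ?thesis unfolding lexle_def by simp
  qed
qed

lemma sig_len[simp]: "length (sig T V D \<phi> s) = length D"
proof (cases "\<exists>\<tau>. sat T V D \<phi> \<tau> s")
  case True
  then obtain \<tau> where "sat T V D \<phi> \<tau> s" by blast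
  from sig_props(1)[OF this] show ?thesis unfolding sat_def by simp
next
  case False then show ?thesis unfolding sig_def by simp
qed

definition Aset :: "('s, 'a) tts \<Rightarrow> (nat \<Rightarrow> 's set) \<Rightarrow> 'a deflist \<Rightarrow> nat \<Rightarrow> 's set" where
  "Aset T V D U = {s. \<exists>\<tau>. sat T V D (PVar U) \<tau> s}"

lemma sat_PVar_ext:
  assumes "U \<in> fst ` set D1" "distinct (map fst (D1 @ D2))" "length \<tau>1 = length D1" "length \<tau>2 = length D2"
  shows "sat T V (D1 @ D2) (PVar U) (\<tau>1 @ \<tau>2) s \<longleftrightarrow> sat T V D1 (PVar U) \<tau>1 s"
proof -
  have "U \<notin> fst ` set D2" using assms(1,2) by auto
  then have "valf T V (D1 @ D2) (\<tau>1 @ \<tau>2) U = valf T V D1 \<tau>1 U"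
    using assms(3) by (simp add: valf_append valf_other)
  then show ?thesis using assms(3,4) unfolding sat_def by simp
qed

lemma sig_ext:
  assumes "U \<in> fst ` set D1" "distinct (map fst (D1 @ D2))"
  shows "take (length D1) (sig T V (D1 @ D2) (PVar U) s) = sig T V D1 (PVar U) s"
proof (cases "\<exists>\<tau>. sat T V D1 (PVar U) \<tau> s")
  case True
  then obtain \<tau> where t: "sat T V D1 (PVar U) \<tau> s" by blast
  let ?x = "replicate (length D2) undefined"
  have l: "length \<tau> = length D1" using t unfolding sat_def by simp
  have t2: "sat T V (D1 @ D2) (PVar U) (\<tau> @ ?x) s"
    using sat_PVar_ext[OF assms l, of ?x] t by simp
  define \<sigma> where "\<sigma> = sig T V (D1 @ D2) (PVar U) s"
  define \<rho> where "\<rho> = sig T V D1 (PVar U) s"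
  have s1: "sat T V (D1 @ D2) (PVar U) \<sigma> s" unfolding \<sigma>_def by (rule sig_props(1)[OF t2])
  have ls: "length \<sigma> = length D1 + length D2" unfolding \<sigma>_def by simp
  have \<sigma>eq: "\<sigma> = take (length D1) \<sigma> @ drop (length D1) \<sigma>" by simp
  have s1': "sat T V D1 (PVar U) (take (length D1) \<sigma>) s"
    using s1 sat_PVar_ext[OF assms, of "take (length D1) \<sigma>" "drop (length D1) \<sigma>"] ls by simp
  have r1: "sat T V D1 (PVar U) \<rho> s" unfolding \<rho>_def by (rule sig_props(1)[OF t])
  have lr: "length \<rho> = length D1" unfolding \<rho>_def by simp
  have le1: "LE \<rho> (take (length D1) \<sigma>)" unfolding \<rho>_def by (rule sig_props(2)[OF s1'])
  have r2: "sat T V (D1 @ D2) (PVar U) (\<rho> @ drop (length D1) \<sigma>) s"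
    using sat_PVar_ext[OF assms lr, of "drop (length D1) \<sigma>"] r1 ls by simp
  have "LE \<sigma> (\<rho> @ drop (length D1) \<sigma>)" using sig_props(2)[OF r2] unfolding \<sigma>_def[symmetric] .
  then have "LE (take (length D1) \<sigma> @ drop (length D1) \<sigma>) (\<rho> @ drop (length D1) \<sigma>)"
    using \<sigma>eq by simp
  then have le2: "LE (take (length D1) \<sigma>) \<rho>"
    by (rule LE_append_take) (simp add: ls lr)
  show ?thesis using LE_antisym[OF le2 le1] unfolding \<sigma>_def \<rho>_def .
next
  case False
  then have "\<not> (\<exists>\<tau>. sat T V (D1 @ D2) (PVar U) \<tau> s)"
  proof (intro notI, elim exE)
    fix \<tau> assume a: "sat T V (D1 @ D2) (PVar U) \<tau> s"
    then have "length \<tau> = length D1 + length D2" unfolding sat_def by simp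
    then have "sat T V D1 (PVar U) (take (length D1) \<tau>) s"
      using a sat_PVar_ext[OF assms, of "take (length D1) \<tau>" "drop (length D1) \<tau>"] by auto
    with False show False by blast
  qed
  with False show ?thesis unfolding sig_def by simp
qed

lemma Aset_ext:
  assumes "U \<in> fst ` set D1" "distinct (map fst (D1 @ D2))"
  shows "Aset T V (D1 @ D2) U = Aset T V D1 U"
proof -
  have "sat T V (D1 @ D2) (PVar U) \<tau> s \<Longrightarrow> \<exists>\<tau>. sat T V D1 (PVar U) \<tau> s" for \<tau> s
  proof -
    assume a: "sat T V (D1 @ D2) (PVar U) \<tau> s"
    then have "length \<tau> = length D1 + length D2" unfolding sat_def by simp
    then show ?thesis using a sat_PVar_ext[OF assms, of "take (length D1) \<tau>" "drop (length D1) \<tau>"]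
      by auto
  qed
  moreover have "sat T V D1 (PVar U) \<tau> s \<Longrightarrow> \<exists>\<tau>. sat T V (D1 @ D2) (PVar U) \<tau> s" for \<tau> s
  proof -
    assume a: "sat T V D1 (PVar U) \<tau> s"
    then have "length \<tau> = length D1" unfolding sat_def by simp
    then show ?thesis using a sat_PVar_ext[OF assms, of \<tau> "replicate (length D2) undefined"] by auto
  qed
  ultimately show ?thesis unfolding Aset_def by blast
qed




lemma size_psubst[simp]: "size (psubst Z U \<phi>) = size \<phi>"
  by (induction \<phi>) auto

lemma bvars_psubst[simp]: "bvars (psubst Z U \<phi>) = bvars \<phi>"
  by (induction \<phi>) auto

lemma finite_fvars[simp]: "finite (fvars \<phi>)"
  by (induction \<phi>) auto

lemma finite_bvars[simp]: "finite (bvars \<phi>)"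
  by (induction \<phi>) auto

lemma fneg_fvars: "fneg \<phi> \<subseteq> fvars \<phi>"
  by (induction \<phi>) auto

lemma fneg_psubst:
  "U \<notin> bvars \<phi> \<Longrightarrow> fneg (psubst Z U \<phi>) = (fneg \<phi> - {Z}) \<union> (if Z \<in> fneg \<phi> then {U} else {})"
  by (induction \<phi>) auto

lemma fvars_psubst:
  "U \<notin> bvars \<phi> \<Longrightarrow> fvars (psubst Z U \<phi>) = (fvars \<phi> - {Z}) \<union> (if Z \<in> fvars \<phi> then {U} else {})"
  by (induction \<phi>) auto

lemma pwf_psubst: "U \<notin> bvars \<phi> \<Longrightarrow> pwf \<phi> \<Longrightarrow> pwf (psubst Z U \<phi>)"
  by (induction \<phi>) (auto simp: fneg_psubst)

lemma fresh_ex: "\<exists>U. fresh U D \<Phi>"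
proof -
  let ?B = "fvars \<Phi> \<union> bvars \<Phi> \<union> fst ` set D \<union> (\<Union>d\<in>set D. fvars (snd d) \<union> bvars (snd d))"
  have "finite ?B" by auto
  then have "\<exists>U. U \<notin> ?B" by (rule ex_new_if_finite[OF infinite_UNIV_nat])
  then obtain U where U: "U \<notin> ?B" by (elim exE)
  have "fresh U D \<Phi>" unfolding fresh_def
  proof (intro conjI ballI)
    show "U \<notin> fvars \<Phi> \<union> bvars \<Phi>" using U by simp
    show "U \<notin> fst ` set D" using U by simp
    fix d assume "d \<in> set D"
    then show "U \<notin> fvars (snd d) \<union> bvars (snd d)" using U by simp
  qed
  then show ?thesis by (rule exI)
qed

definition freshU :: "'a deflist \<Rightarrow> 'a pform \<Rightarrow> nat" where
  "freshU D \<Phi> = (SOME U. fresh U D \<Phi>)"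

lemma freshU: "fresh (freshU D \<Phi>) D \<Phi>"
  unfolding freshU_def using fresh_ex by (rule someI_ex)

definition isfix :: "'a pform \<Rightarrow> bool" where
  "isfix \<phi> \<longleftrightarrow> (\<exists>Z \<psi>. \<phi> = PNu Z \<psi> \<or> \<phi> = PMu Z \<psi>)"

definition gdl :: "'a deflist \<Rightarrow> 'a pform \<Rightarrow> bool" where
  "gdl D \<Phi> \<longleftrightarrow> wf_deflist D \<and> pwf \<Phi> \<and> (\<forall>U\<in>fst ` set D. U \<notin> fneg \<Phi> \<and> U \<notin> bvars \<Phi>) \<and>
     (\<forall>d\<in>set D. isfix (snd d) \<and> pwf (snd d))"

definition good :: "('s, 'a) tts \<Rightarrow> (nat \<Rightarrow> 's set) \<Rightarrow> 's set \<Rightarrow> 'a deflist \<Rightarrow> 'a pform \<Rightarrow> bool" where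
  "good T V S D \<Phi> \<longleftrightarrow> gdl D \<Phi> \<and> (\<forall>s\<in>S. \<exists>\<tau>. sat T V D \<Phi> \<tau> s)"

section \<open>The tableau construction\<close>

definition Ux :: "'a deflist \<Rightarrow> 'a pform \<Rightarrow> nat" where "Ux D \<Phi> = freshU D \<Phi>"
definition Dx :: "'a deflist \<Rightarrow> 'a pform \<Rightarrow> 'a deflist" where "Dx D \<Phi> = D @ [(Ux D \<Phi>, \<Phi>)]"
definition Ax :: "('s, 'a) tts \<Rightarrow> (nat \<Rightarrow> 's set) \<Rightarrow> 'a deflist \<Rightarrow> 'a pform \<Rightarrow> 's set" where
  "Ax T V D \<Phi> = Aset T V (Dx D \<Phi>) (Ux D \<Phi>)"

definition orS :: "('s, 'a) tts \<Rightarrow> (nat \<Rightarrow> 's set) \<Rightarrow> 's set \<Rightarrow> 'a deflist \<Rightarrow> 'a pform \<Rightarrow> 'a pform \<Rightarrow> 's set" where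
  "orS T V S D \<phi> \<psi> = {s \<in> S. sat T V D \<phi> (sig T V D (POr \<phi> \<psi>) s) s}"

definition diaf :: "('s, 'a) tts \<Rightarrow> (nat \<Rightarrow> 's set) \<Rightarrow> 'a deflist \<Rightarrow> 'a set \<Rightarrow> 'a pform \<Rightarrow> 's \<Rightarrow> 's" where
  "diaf T V D K \<psi> s = (SOME s'. ksucc T s K s' \<and> sat T V D \<psi> (sig T V D (PDia K \<psi>) s) s')"

definition exf :: "('s, 'a) tts \<Rightarrow> (nat \<Rightarrow> 's set) \<Rightarrow> 'a deflist \<Rightarrow> 'a pform \<Rightarrow> 'a pform \<Rightarrow> 's \<Rightarrow> real" where
  "exf T V D \<phi> \<psi> s = (SOME \<delta>. \<delta> \<in> delays T s \<and>
      (\<forall>s'\<in>succ_lt T s \<delta>. sat T V D \<phi> (sig T V D (PEx \<phi> \<psi>) s) s') \<and>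
      sat T V D \<psi> (sig T V D (PEx \<phi> \<psi>) s) (succ T s \<delta>))"

definition allP :: "('s, 'a) tts \<Rightarrow> (nat \<Rightarrow> 's set) \<Rightarrow> 'a deflist \<Rightarrow> 'a pform \<Rightarrow> 'a pform \<Rightarrow> 's \<Rightarrow> real \<Rightarrow> real \<Rightarrow> bool" where
  "allP T V D \<phi> \<psi> s \<delta> \<delta>' \<longleftrightarrow> 0 \<le> \<delta>' \<and> \<delta>' < \<delta> \<and>
      (\<exists>s'. tr T s (dly T \<delta>') s' \<and> sat T V D \<phi> (sig T V D (PAll \<phi> \<psi>) s) s')"

definition allg :: "('s, 'a) tts \<Rightarrow> (nat \<Rightarrow> 's set) \<Rightarrow> 'a deflist \<Rightarrow> 'a pform \<Rightarrow> 'a pform \<Rightarrow> 's \<Rightarrow> real \<Rightarrow> real" where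
  "allg T V D \<phi> \<psi> s \<delta> = (if \<exists>\<delta>'. allP T V D \<phi> \<psi> s \<delta> \<delta>' then (SOME \<delta>'. allP T V D \<phi> \<psi> s \<delta> \<delta>') else \<delta>)"

definition gl :: "('s, 'a) tts \<Rightarrow> 's set \<Rightarrow> ('s \<Rightarrow> real \<Rightarrow> real) \<Rightarrow> 's set" where
  "gl T S g = {succ T s (g s \<delta>) | s \<delta>. s \<in> S \<and> \<delta> \<in> delays T s \<and> g s \<delta> < \<delta>}"
definition ge :: "('s, 'a) tts \<Rightarrow> 's set \<Rightarrow> ('s \<Rightarrow> real \<Rightarrow> real) \<Rightarrow> 's set" where
  "ge T S g = {succ T s (g s \<delta>) | s \<delta>. s \<in> S \<and> \<delta> \<in> delays T s \<and> g s \<delta> = \<delta>}"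

function build :: "('s, 'a) tts \<Rightarrow> (nat \<Rightarrow> 's set) \<Rightarrow> 's set \<Rightarrow> 'a deflist \<Rightarrow> 'a pform \<Rightarrow> ('s, 'a) tab" where
  "build T V S D (PVar Z) = TNode S D (PVar Z) None []"
| "build T V S D (PNegVar Z) = TNode S D (PNegVar Z) None []"
| "build T V S D (PAnd \<phi> \<psi>) = TNode S D (PAnd \<phi> \<psi>) (Some R_And) [build T V S D \<phi>, build T V S D \<psi>]"
| "build T V S D (POr \<phi> \<psi>) = TNode S D (POr \<phi> \<psi>) (Some R_Or)
     [build T V (orS T V S D \<phi> \<psi>) D \<phi>, build T V (S - orS T V S D \<phi> \<psi>) D \<psi>]"
| "build T V S D (PBox K \<psi>) = TNode S D (PBox K \<psi>) (Some R_Box)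
     [build T V {s'. \<exists>s\<in>S. ksucc T s K s'} D \<psi>]"
| "build T V S D (PDia K \<psi>) = TNode S D (PDia K \<psi>) (Some (R_Dia (diaf T V D K \<psi>)))
     [build T V (diaf T V D K \<psi> ` S) D \<psi>]"
| "build T V S D (PAll \<phi> \<psi>) = TNode S D (PAll \<phi> \<psi>) (Some (R_All (allg T V D \<phi> \<psi>)))
     [build T V (gl T S (allg T V D \<phi> \<psi>)) D \<phi>, build T V (ge T S (allg T V D \<phi> \<psi>)) D \<psi>]"
| "build T V S D (PEx \<phi> \<psi>) = TNode S D (PEx \<phi> \<psi>) (Some (R_Ex (exf T V D \<phi> \<psi>)))
     [build T V (\<Union>s\<in>S. succ_lt T s (exf T V D \<phi> \<psi> s)) D \<phi>,
      build T V ((\<lambda>s. succ T s (exf T V D \<phi> \<psi> s)) ` S) D \<psi>]"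
| "build T V S D (PNu Z \<psi>) = TNode S D (PNu Z \<psi>) (Some R_Fix)
     [TNode S (Dx D (PNu Z \<psi>)) (PVar (Ux D (PNu Z \<psi>))) (Some R_Thin)
       [TNode (Ax T V D (PNu Z \<psi>)) (Dx D (PNu Z \<psi>)) (PVar (Ux D (PNu Z \<psi>))) (Some R_Un)
         [build T V (Ax T V D (PNu Z \<psi>)) (Dx D (PNu Z \<psi>)) (psubst Z (Ux D (PNu Z \<psi>)) \<psi>)]]]"
| "build T V S D (PMu Z \<psi>) = TNode S D (PMu Z \<psi>) (Some R_Fix)
     [TNode S (Dx D (PMu Z \<psi>)) (PVar (Ux D (PMu Z \<psi>))) (Some R_Thin)
       [TNode (Ax T V D (PMu Z \<psi>)) (Dx D (PMu Z \<psi>)) (PVar (Ux D (PMu Z \<psi>))) (Some R_Un)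
         [build T V (Ax T V D (PMu Z \<psi>)) (Dx D (PMu Z \<psi>)) (psubst Z (Ux D (PMu Z \<psi>)) \<psi>)]]]"
  by pat_completeness auto
termination
  by (relation "measure (\<lambda>(T, V, S, D, \<Phi>). size \<Phi>)") auto

definition unnode :: "('s, 'a) tts \<Rightarrow> (nat \<Rightarrow> 's set) \<Rightarrow> 'a deflist \<Rightarrow> 'a pform \<Rightarrow> nat \<Rightarrow> 'a pform \<Rightarrow> ('s, 'a) tab" where
  "unnode T V D \<Phi> Z \<psi> = TNode (Ax T V D \<Phi>) (Dx D \<Phi>) (PVar (Ux D \<Phi>)) (Some R_Un)
         [build T V (Ax T V D \<Phi>) (Dx D \<Phi>) (psubst Z (Ux D \<Phi>) \<psi>)]"

definition fixchild :: "('s, 'a) tts \<Rightarrow> (nat \<Rightarrow> 's set) \<Rightarrow> 's set \<Rightarrow> 'a deflist \<Rightarrow> 'a pform \<Rightarrow> nat \<Rightarrow> 'a pform \<Rightarrow> ('s, 'a) tab" where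
  "fixchild T V S D \<Phi> Z \<psi> = TNode S (Dx D \<Phi>) (PVar (Ux D \<Phi>)) (Some R_Thin) [unnode T V D \<Phi> Z \<psi>]"

lemma build_fix: "\<Phi> = PNu Z \<psi> \<or> \<Phi> = PMu Z \<psi> \<Longrightarrow> build T V S D \<Phi> = TNode S D \<Phi> (Some R_Fix) [fixchild T V S D \<Phi> Z \<psi>]"
  unfolding fixchild_def unnode_def by auto

lemma build_root[simp]: "tS (build T V S D \<Phi>) = S" "tD (build T V S D \<Phi>) = D" "tF (build T V S D \<Phi>) = \<Phi>"
  by (cases \<Phi>; simp)+




lemma sat_len: "sat T V D \<phi> \<tau> s \<Longrightarrow> length \<tau> = length D"
  unfolding sat_def by simp

lemma sat_And: "sat T V D (PAnd \<phi> \<psi>) \<tau> s \<Longrightarrow> sat T V D \<phi> \<tau> s \<and> sat T V D \<psi> \<tau> s"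
  unfolding sat_def by simp

lemma sat_Or: "sat T V D (POr \<phi> \<psi>) \<tau> s \<Longrightarrow> \<not> sat T V D \<phi> \<tau> s \<Longrightarrow> sat T V D \<psi> \<tau> s"
  unfolding sat_def by simp

lemma sat_Box: "sat T V D (PBox K \<psi>) \<tau> s \<Longrightarrow> ksucc T s K s' \<Longrightarrow> sat T V D \<psi> \<tau> s'"
  unfolding sat_def by simp

lemma sat_Dia: "sat T V D (PDia K \<psi>) \<tau> s \<Longrightarrow> \<exists>s'. ksucc T s K s' \<and> sat T V D \<psi> \<tau> s'"
  unfolding sat_def by simp

lemma sat_Ex: "sat T V D (PEx \<phi> \<psi>) \<tau> s \<Longrightarrow>
   \<exists>\<delta>. \<delta> \<in> delays T s \<and> (\<forall>s'\<in>succ_lt T s \<delta>. sat T V D \<phi> \<tau> s') \<and> sat T V D \<psi> \<tau> (succ T s \<delta>)"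
  unfolding sat_def by auto

lemma sat_All: "sat T V D (PAll \<phi> \<psi>) \<tau> s \<Longrightarrow> \<delta> \<in> delays T s \<Longrightarrow> (\<forall>s'\<in>succ_lt T s \<delta>. \<not> sat T V D \<phi> \<tau> s')
   \<Longrightarrow> sat T V D \<psi> \<tau> (succ T s \<delta>)"
  unfolding sat_def by auto

lemma sig_sat: "sat T V D \<Phi> \<tau> s \<Longrightarrow> sat T V D \<Phi> (sig T V D \<Phi> s) s"
  by (rule sig_props(1))

lemma diaf_prop:
  assumes "sat T V D (PDia K \<psi>) \<tau> s"
  shows "ksucc T s K (diaf T V D K \<psi> s) \<and> sat T V D \<psi> (sig T V D (PDia K \<psi>) s) (diaf T V D K \<psi> s)"
proof -
  have "\<exists>s'. ksucc T s K s' \<and> sat T V D \<psi> (sig T V D (PDia K \<psi>) s) s'"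
    by (rule sat_Dia[OF sig_sat[OF assms]])
  then show ?thesis unfolding diaf_def by (rule someI_ex)
qed

lemma exf_prop:
  assumes "sat T V D (PEx \<phi> \<psi>) \<tau> s"
  shows "exf T V D \<phi> \<psi> s \<in> delays T s \<and>
      (\<forall>s'\<in>succ_lt T s (exf T V D \<phi> \<psi> s). sat T V D \<phi> (sig T V D (PEx \<phi> \<psi>) s) s') \<and>
      sat T V D \<psi> (sig T V D (PEx \<phi> \<psi>) s) (succ T s (exf T V D \<phi> \<psi> s))"
proof -
  have "\<exists>\<delta>. \<delta> \<in> delays T s \<and> (\<forall>s'\<in>succ_lt T s \<delta>. sat T V D \<phi> (sig T V D (PEx \<phi> \<psi>) s) s') \<and>
      sat T V D \<psi> (sig T V D (PEx \<phi> \<psi>) s) (succ T s \<delta>)"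
    by (rule sat_Ex[OF sig_sat[OF assms]])
  then show ?thesis unfolding exf_def by (rule someI_ex)
qed

lemma succ_eq:
  assumes "is_TTS T" "0 \<le> \<delta>" "tr T s (dly T \<delta>) s'"
  shows "succ T s \<delta> = s'"
proof -
  have det: "\<forall>s s' s'' \<delta>. 0 \<le> \<delta> \<longrightarrow> tr T s (dly T \<delta>) s' \<longrightarrow> tr T s (dly T \<delta>) s'' \<longrightarrow> s' = s''"
    using assms(1) unfolding is_TTS_def by (elim conjE) assumption
  show ?thesis unfolding succ_def
  proof (rule the_equality)
    show "tr T s (dly T \<delta>) s'" by (rule assms(3))
  next
    fix s'' assume a: "tr T s (dly T \<delta>) s''"
    show "s'' = s'" using det[rule_format, OF assms(2) a assms(3)] .
  qed
qed

lemma allg_props: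
  assumes tts: "is_TTS T" and s: "sat T V D (PAll \<phi> \<psi>) \<tau> s" and d: "\<delta> \<in> delays T s"
  shows "0 \<le> allg T V D \<phi> \<psi> s \<delta> \<and> allg T V D \<phi> \<psi> s \<delta> \<le> \<delta> \<and>
    (allg T V D \<phi> \<psi> s \<delta> < \<delta> \<longrightarrow> sat T V D \<phi> (sig T V D (PAll \<phi> \<psi>) s) (succ T s (allg T V D \<phi> \<psi> s \<delta>))) \<and>
    (allg T V D \<phi> \<psi> s \<delta> = \<delta> \<longrightarrow> sat T V D \<psi> (sig T V D (PAll \<phi> \<psi>) s) (succ T s \<delta>))"
proof (cases "\<exists>\<delta>'. allP T V D \<phi> \<psi> s \<delta> \<delta>'")
  case True
  then have g: "allg T V D \<phi> \<psi> s \<delta> = (SOME \<delta>'. allP T V D \<phi> \<psi> s \<delta> \<delta>')" unfolding allg_def by simp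
  have "allP T V D \<phi> \<psi> s \<delta> (SOME \<delta>'. allP T V D \<phi> \<psi> s \<delta> \<delta>')" using True by (rule someI_ex)
  then have P: "allP T V D \<phi> \<psi> s \<delta> (allg T V D \<phi> \<psi> s \<delta>)" unfolding g .
  then obtain s' where s': "tr T s (dly T (allg T V D \<phi> \<psi> s \<delta>)) s'"
      "sat T V D \<phi> (sig T V D (PAll \<phi> \<psi>) s) s'" unfolding allP_def by blast
  have "succ T s (allg T V D \<phi> \<psi> s \<delta>) = s'"
    using succ_eq[OF tts _ s'(1)] P unfolding allP_def by blast
  then show ?thesis using P s' unfolding allP_def by auto
next
  case False
  then have g: "allg T V D \<phi> \<psi> s \<delta> = \<delta>" unfolding allg_def by (simp only: if_False)
  have "\<forall>s'\<in>succ_lt T s \<delta>. \<not> sat T V D \<phi> (sig T V D (PAll \<phi> \<psi>) s) s'"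
    using False unfolding succ_lt_def allP_def by blast
  then have "sat T V D \<psi> (sig T V D (PAll \<phi> \<psi>) s) (succ T s \<delta>)"
    using sat_All[OF sig_sat[OF s] d] by blast
  then show ?thesis using g d unfolding delays_def by simp
qed

lemma gdl_fix:
  assumes "gdl D \<Phi>" "\<Phi> = PNu Z \<psi> \<or> \<Phi> = PMu Z \<psi>"
  shows "Z \<notin> fneg \<psi>" "Ux D \<Phi> \<notin> fvars \<psi>" "Ux D \<Phi> \<notin> bvars \<psi>" "Ux D \<Phi> \<noteq> Z"
    "Ux D \<Phi> \<notin> fst ` set D"
proof -
  have f: "fresh (Ux D \<Phi>) D \<Phi>" unfolding Ux_def by (rule freshU)
  show "Z \<notin> fneg \<psi>" using assms unfolding gdl_def by auto
  have bv: "bvars \<Phi> = insert Z (bvars \<psi>)" and fv: "fvars \<Phi> = fvars \<psi> - {Z}"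
    using assms(2) by auto
  have u1: "Ux D \<Phi> \<notin> bvars \<Phi>" "Ux D \<Phi> \<notin> fvars \<Phi>" using f unfolding fresh_def by auto
  show "Ux D \<Phi> \<notin> bvars \<psi>" "Ux D \<Phi> \<noteq> Z" using u1(1) unfolding bv by auto
  then show "Ux D \<Phi> \<notin> fvars \<psi>" using u1(2) unfolding fv by auto
  show "Ux D \<Phi> \<notin> fst ` set D" using f unfolding fresh_def by auto
qed

lemma valf_Dx:
  assumes "length \<tau> = length D"
  shows "valf T V (Dx D \<Phi>) (\<tau> @ [\<alpha>]) = upd T (valf T V D \<tau>) (Ux D \<Phi>, \<Phi>) \<alpha>"
  unfolding Dx_def using assms by (rule valf_snoc)

lemma fix_sat:
  assumes "\<Phi> = PNu Z \<psi> \<or> \<Phi> = PMu Z \<psi>" "sat T V D \<Phi> \<tau> s"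
  shows "\<exists>\<alpha>. sat T V (Dx D \<Phi>) (PVar (Ux D \<Phi>)) (\<tau> @ [\<alpha>]) s"
proof -
  have l: "length \<tau> = length D" using assms(2) by (rule sat_len)
  define W where "W = valf T V D \<tau>"
  have s: "s \<in> psem T W \<Phi>" using assms(2) unfolding sat_def W_def by simp
  have ld: "length (\<tau> @ [\<alpha>]) = length (Dx D \<Phi>)" for \<alpha> using l unfolding Dx_def by simp
  from assms(1) show ?thesis
  proof
    assume P: "\<Phi> = PNu Z \<psi>"
    have "sat T V (Dx D \<Phi>) (PVar (Ux D \<Phi>)) (\<tau> @ [undefined]) s"
      using s ld unfolding sat_def valf_Dx[OF l] W_def P by simp
    then show ?thesis by (rule exI)
  next
    assume P: "\<Phi> = PMu Z \<psi>"
    have "s \<in> lfp (\<lambda>X. psem T (W(Z := X)) \<psi>)" using s P by simp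
    then obtain \<alpha> where a: "s \<in> stg (\<lambda>X. psem T (W(Z := X)) \<psi>) \<alpha>" using lfp_stg by (metis)
    have "sat T V (Dx D \<Phi>) (PVar (Ux D \<Phi>)) (\<tau> @ [\<alpha>]) s"
      using a ld unfolding sat_def valf_Dx[OF l] W_def P by simp
    then show ?thesis by (rule exI)
  qed
qed

lemma un_sat:
  assumes g: "gdl D \<Phi>" and P: "\<Phi> = PNu Z \<psi> \<or> \<Phi> = PMu Z \<psi>"
    and s: "sat T V (Dx D \<Phi>) (PVar (Ux D \<Phi>)) \<tau> s"
  shows "\<exists>\<tau>'. sat T V (Dx D \<Phi>) (psubst Z (Ux D \<Phi>) \<psi>) \<tau>' s \<and> LE \<tau>' \<tau> \<and> (\<Phi> = PMu Z \<psi> \<longrightarrow> LL \<tau>' \<tau>)"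
proof -
  let ?U = "Ux D \<Phi>"
  have lt: "length \<tau> = Suc (length D)" using sat_len[OF s] unfolding Dx_def by simp
  obtain \<tau>0 \<alpha> where t: "\<tau> = \<tau>0 @ [\<alpha>]"
    using lt by (metis append_butlast_last_id length_0_conv nat.distinct(1))
  have l0: "length \<tau>0 = length D" using lt t by simp
  define W where "W = valf T V D \<tau>0"
  define F where "F = (\<lambda>X. psem T (W(Z := X)) \<psi>)"
  have fr: "Z \<notin> fneg \<psi>" "?U \<notin> fvars \<psi>" "?U \<notin> bvars \<psi>" "?U \<noteq> Z"
    using gdl_fix[OF g P] by auto
  have key: "psem T (W(?U := X)) (psubst Z ?U \<psi>) = F X" for X
  proof -
    have "psem T (W(?U := X)) (psubst Z ?U \<psi>) = psem T (W(?U := X, Z := X)) \<psi>"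
      using psem_psubst[OF fr(3), of T "W(?U := X)" Z] by (simp only: fun_upd_same)
    also have "W(?U := X, Z := X) = W(Z := X, ?U := X)" using fr(4) by (rule fun_upd_twist)
    also have "psem T (W(Z := X, ?U := X)) \<psi> = F X" unfolding F_def by (rule psem_fupd_irrel[OF fr(2)])
    finally show ?thesis .
  qed
  have ld: "length (\<tau>0 @ [\<beta>]) = length (Dx D \<Phi>)" for \<beta> using l0 unfolding Dx_def by simp
  from P show ?thesis
  proof
    assume PN: "\<Phi> = PNu Z \<psi>"
    have v: "valf T V (Dx D \<Phi>) \<tau> = W(?U := gfp F)"
      unfolding t valf_Dx[OF l0] W_def F_def PN by simp
    have "s \<in> gfp F" using s unfolding sat_def v by simp
    moreover have "mono F" unfolding F_def by (rule psem_mono[OF fr(1)])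
    ultimately have "s \<in> F (gfp F)" by (metis gfp_unfold)
    then have "sat T V (Dx D \<Phi>) (psubst Z ?U \<psi>) \<tau> s"
      unfolding sat_def v key using lt unfolding Dx_def by simp
    then show ?thesis using PN by auto
  next
    assume PM: "\<Phi> = PMu Z \<psi>"
    have v: "valf T V (Dx D \<Phi>) (\<tau>0 @ [\<beta>]) = W(?U := stg F \<beta>)" for \<beta>
      unfolding valf_Dx[OF l0] W_def F_def PM by simp
    have "s \<in> stg F \<alpha>" using s unfolding sat_def t v by simp
    then obtain \<beta> where b: "(\<beta>, \<alpha>) \<in> Rw" "s \<in> F (stg F \<beta>)" using stg_elim by metis
    have "sat T V (Dx D \<Phi>) (psubst Z ?U \<psi>) (\<tau>0 @ [\<beta>]) s"
      unfolding sat_def v key using b(2) ld by simp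
    moreover have "LL (\<tau>0 @ [\<beta>]) \<tau>" unfolding t by (rule lexl_snoc[OF b(1)])
    ultimately show ?thesis by (auto intro: lexl_lexle)
  qed
qed

lemma wf_deflist_set:
  "wf_deflist D \<Longrightarrow> a \<in> set D \<Longrightarrow> b \<in> set D \<Longrightarrow> fst a \<notin> bvars (snd b)"
  unfolding wf_deflist_def by (metis in_set_conv_nth)

lemma wf_deflist_snoc:
  assumes w: "wf_deflist D" and f: "fresh U D \<Phi>" and b: "\<forall>U'\<in>fst ` set D. U' \<notin> bvars \<Phi>"
  shows "wf_deflist (D @ [(U, \<Phi>)])"
  unfolding wf_deflist_def
proof (intro conjI allI impI)
  show "distinct (map fst (D @ [(U, \<Phi>)]))" using w f unfolding wf_deflist_def fresh_def by auto
next
  fix i j assume i: "i < length (D @ [(U, \<Phi>)])" and j: "j < length (D @ [(U, \<Phi>)])"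
  have mi: "(D @ [(U, \<Phi>)]) ! i \<in> set D \<or> (D @ [(U, \<Phi>)]) ! i = (U, \<Phi>)"
    using i by (metis nth_mem rotate1.simps(2) set_rotate1 set_ConsD)
  have mj: "(D @ [(U, \<Phi>)]) ! j \<in> set D \<or> (D @ [(U, \<Phi>)]) ! j = (U, \<Phi>)"
    using j by (metis nth_mem rotate1.simps(2) set_rotate1 set_ConsD)
  show "fst ((D @ [(U, \<Phi>)]) ! i) \<notin> bvars (snd ((D @ [(U, \<Phi>)]) ! j))"
    using mi mj wf_deflist_set[OF w] f b unfolding fresh_def by fastforce
next
  fix i j assume ij: "i \<le> j" and j: "j < length (D @ [(U, \<Phi>)])"
  show "fst ((D @ [(U, \<Phi>)]) ! j) \<notin> fvars (snd ((D @ [(U, \<Phi>)]) ! i))"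
  proof (cases "j < length D")
    case True
    then have "i < length D" using ij by simp
    then show ?thesis using True w ij unfolding wf_deflist_def by (simp add: nth_append)
  next
    case False
    then have jj: "j = length D" using j by simp
    have mi: "(D @ [(U, \<Phi>)]) ! i \<in> set D \<or> (D @ [(U, \<Phi>)]) ! i = (U, \<Phi>)"
      using ij jj by (metis le_imp_less_Suc length_append_singleton nth_mem rotate1.simps(2) set_rotate1 set_ConsD)
    then show ?thesis using jj f unfolding fresh_def by (auto simp: nth_append)
  qed
qed

lemma gdl_Dx:
  assumes g: "gdl D \<Phi>" and P: "\<Phi> = PNu Z \<psi> \<or> \<Phi> = PMu Z \<psi>"
  shows "gdl (Dx D \<Phi>) (PVar (Ux D \<Phi>))" "gdl (Dx D \<Phi>) (psubst Z (Ux D \<Phi>) \<psi>)"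
proof -
  let ?U = "Ux D \<Phi>"
  have f: "fresh ?U D \<Phi>" unfolding Ux_def by (rule freshU)
  have w: "wf_deflist (Dx D \<Phi>)" unfolding Dx_def
    using wf_deflist_snoc[OF _ f] g unfolding gdl_def by auto
  have fx: "isfix \<Phi>" using P unfolding isfix_def by auto
  have pw: "pwf \<Phi>" using g unfolding gdl_def by auto
  have sd: "\<forall>d\<in>set (Dx D \<Phi>). isfix (snd d) \<and> pwf (snd d)" using g fx pw unfolding gdl_def Dx_def by auto
  show "gdl (Dx D \<Phi>) (PVar ?U)" unfolding gdl_def using w sd by simp
  have fr: "Z \<notin> fneg \<psi>" "?U \<notin> fvars \<psi>" "?U \<notin> bvars \<psi>" "?U \<noteq> Z"
    using gdl_fix[OF g P] by auto
  have pwp: "pwf (psubst Z ?U \<psi>)" using pwf_psubst[OF fr(3)] pw P by auto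
  have "?U \<notin> fneg \<psi>" using fr(2) fneg_fvars by blast
  then have fnU: "?U \<notin> fneg (psubst Z ?U \<psi>)" using fr by (simp add: fneg_psubst[OF fr(3)])
  have old: "U' \<notin> fneg (psubst Z ?U \<psi>) \<and> U' \<notin> bvars (psubst Z ?U \<psi>)" if "U' \<in> fst ` set D" for U'
  proof -
    have "U' \<notin> fneg \<Phi>" "U' \<notin> bvars \<Phi>" using g that unfolding gdl_def by auto
    moreover have "?U \<notin> fst ` set D" using f unfolding fresh_def by simp
    then have "U' \<noteq> ?U" using that by metis
    ultimately show ?thesis using P fr by (auto simp: fneg_psubst[OF fr(3)])
  qed
  show "gdl (Dx D \<Phi>) (psubst Z ?U \<psi>)" unfolding gdl_def
    using w sd pwp fnU old fr(3) unfolding Dx_def by auto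
qed

lemma gdl_sub2:
  assumes "gdl D \<Phi>" "\<Phi> = PAnd \<phi> \<psi> \<or> \<Phi> = POr \<phi> \<psi> \<or> \<Phi> = PAll \<phi> \<psi> \<or> \<Phi> = PEx \<phi> \<psi>"
  shows "gdl D \<phi>" "gdl D \<psi>"
  using assms unfolding gdl_def by auto

lemma gdl_sub1:
  assumes "gdl D \<Phi>" "\<Phi> = PBox K \<psi> \<or> \<Phi> = PDia K \<psi>"
  shows "gdl D \<psi>"
  using assms unfolding gdl_def by auto

lemma gdl_wf_sequent: "gdl D \<Phi> \<Longrightarrow> wf_sequent D \<Phi>"
  unfolding gdl_def wf_sequent_def using pos_to_core by blast




definition Kd :: "('s, 'a) tts \<Rightarrow> (nat \<Rightarrow> 's set) \<Rightarrow> ('s, 'a) tab \<Rightarrow> bool" where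
  "Kd T V n \<longleftrightarrow> (\<exists>S D \<Phi>. good T V S D \<Phi> \<and> n = build T V S D \<Phi>) \<or>
     (\<exists>S D \<Phi> Z \<psi>. good T V S D \<Phi> \<and> (\<Phi> = PNu Z \<psi> \<or> \<Phi> = PMu Z \<psi>) \<and> n = fixchild T V S D \<Phi> Z \<psi>) \<or>
     (\<exists>D \<Phi> Z \<psi>. gdl D \<Phi> \<and> (\<Phi> = PNu Z \<psi> \<or> \<Phi> = PMu Z \<psi>) \<and> n = unnode T V D \<Phi> Z \<psi>)"

lemma fixchild_simps[simp]:
  "tS (fixchild T V S D \<Phi> Z \<psi>) = S" "tD (fixchild T V S D \<Phi> Z \<psi>) = Dx D \<Phi>"
  "tF (fixchild T V S D \<Phi> Z \<psi>) = PVar (Ux D \<Phi>)" "tR (fixchild T V S D \<Phi> Z \<psi>) = Some R_Thin"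
  "tC (fixchild T V S D \<Phi> Z \<psi>) = [unnode T V D \<Phi> Z \<psi>]"
  unfolding fixchild_def by simp_all

lemma unnode_simps[simp]:
  "tS (unnode T V D \<Phi> Z \<psi>) = Ax T V D \<Phi>" "tD (unnode T V D \<Phi> Z \<psi>) = Dx D \<Phi>"
  "tF (unnode T V D \<Phi> Z \<psi>) = PVar (Ux D \<Phi>)" "tR (unnode T V D \<Phi> Z \<psi>) = Some R_Un"
  "tC (unnode T V D \<Phi> Z \<psi>) = [build T V (Ax T V D \<Phi>) (Dx D \<Phi>) (psubst Z (Ux D \<Phi>) \<psi>)]"
  unfolding unnode_def by simp_all

lemma good_sat: "good T V S D \<Phi> \<Longrightarrow> s \<in> S \<Longrightarrow> sat T V D \<Phi> (sig T V D \<Phi> s) s"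
proof -
  assume "good T V S D \<Phi>" "s \<in> S"
  then obtain \<tau> where "sat T V D \<Phi> \<tau> s" unfolding good_def by blast
  then show ?thesis by (rule sig_sat)
qed

lemma good_gdl: "good T V S D \<Phi> \<Longrightarrow> gdl D \<Phi>"
  unfolding good_def by simp

lemma goodI: "gdl D \<Phi> \<Longrightarrow> (\<And>s. s \<in> S \<Longrightarrow> \<exists>\<tau>. sat T V D \<Phi> \<tau> s) \<Longrightarrow> good T V S D \<Phi>"
  unfolding good_def by blast

lemma Kd_buildI: "good T V S D \<Phi> \<Longrightarrow> Kd T V (build T V S D \<Phi>)"
  unfolding Kd_def by blast

lemma Kd_build_child:
  assumes tts: "is_TTS T" and g: "good T V S D \<Phi>" and c: "c \<in> set (tC (build T V S D \<Phi>))"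
  shows "Kd T V c"
proof (cases \<Phi>)
  case (PVar Z) then show ?thesis using c by simp
next
  case (PNegVar Z) then show ?thesis using c by simp
next
  case (PAnd \<phi> \<psi>)
  have gd: "gdl D \<phi>" "gdl D \<psi>" using gdl_sub2[OF good_gdl[OF g]] PAnd by auto
  have "good T V S D \<phi>"
  proof (rule goodI[OF gd(1)])
    fix s assume "s \<in> S"
    then have "sat T V D (PAnd \<phi> \<psi>) (sig T V D \<Phi> s) s" using good_sat[OF g] PAnd by simp
    then show "\<exists>\<tau>. sat T V D \<phi> \<tau> s" by (blast dest: sat_And)
  qed
  moreover have "good T V S D \<psi>"
  proof (rule goodI[OF gd(2)])
    fix s assume "s \<in> S"
    then have "sat T V D (PAnd \<phi> \<psi>) (sig T V D \<Phi> s) s" using good_sat[OF g] PAnd by simp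
    then show "\<exists>\<tau>. sat T V D \<psi> \<tau> s" by (blast dest: sat_And)
  qed
  moreover have "c = build T V S D \<phi> \<or> c = build T V S D \<psi>" using c PAnd by simp
  ultimately show ?thesis using Kd_buildI by metis
next
  case (POr \<phi> \<psi>)
  have gd: "gdl D \<phi>" "gdl D \<psi>" using gdl_sub2[OF good_gdl[OF g]] POr by auto
  have "good T V (orS T V S D \<phi> \<psi>) D \<phi>"
  proof (rule goodI[OF gd(1)])
    fix s assume "s \<in> orS T V S D \<phi> \<psi>"
    then show "\<exists>\<tau>. sat T V D \<phi> \<tau> s" unfolding orS_def by blast
  qed
  moreover have "good T V (S - orS T V S D \<phi> \<psi>) D \<psi>"
  proof (rule goodI[OF gd(2)])
    fix s assume "s \<in> S - orS T V S D \<phi> \<psi>"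
    then have s: "s \<in> S" "\<not> sat T V D \<phi> (sig T V D (POr \<phi> \<psi>) s) s" unfolding orS_def by auto
    have "sat T V D (POr \<phi> \<psi>) (sig T V D (POr \<phi> \<psi>) s) s" using good_sat[OF g s(1)] POr by simp
    then have "sat T V D \<psi> (sig T V D (POr \<phi> \<psi>) s) s" using s(2) by (rule sat_Or)
    then show "\<exists>\<tau>. sat T V D \<psi> \<tau> s" by (rule exI)
  qed
  moreover have "c = build T V (orS T V S D \<phi> \<psi>) D \<phi> \<or> c = build T V (S - orS T V S D \<phi> \<psi>) D \<psi>"
    using c POr by simp
  ultimately show ?thesis using Kd_buildI by metis
next
  case (PBox K \<psi>)
  have gd: "gdl D \<psi>" using gdl_sub1[OF good_gdl[OF g]] PBox by auto
  have "good T V {s'. \<exists>s\<in>S. ksucc T s K s'} D \<psi>"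
  proof (rule goodI[OF gd])
    fix s' assume "s' \<in> {s'. \<exists>s\<in>S. ksucc T s K s'}"
    then obtain s where s: "s \<in> S" "ksucc T s K s'" by blast
    have "sat T V D (PBox K \<psi>) (sig T V D (PBox K \<psi>) s) s" using good_sat[OF g s(1)] PBox by simp
    then have "sat T V D \<psi> (sig T V D (PBox K \<psi>) s) s'" using s(2) by (rule sat_Box)
    then show "\<exists>\<tau>. sat T V D \<psi> \<tau> s'" by (rule exI)
  qed
  moreover have "c = build T V {s'. \<exists>s\<in>S. ksucc T s K s'} D \<psi>" using c PBox by simp
  ultimately show ?thesis using Kd_buildI by metis
next
  case (PDia K \<psi>)
  have gd: "gdl D \<psi>" using gdl_sub1[OF good_gdl[OF g]] PDia by auto
  have "good T V (diaf T V D K \<psi> ` S) D \<psi>"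
  proof (rule goodI[OF gd])
    fix s' assume "s' \<in> diaf T V D K \<psi> ` S"
    then obtain s where s: "s \<in> S" "s' = diaf T V D K \<psi> s" by blast
    have "sat T V D (PDia K \<psi>) (sig T V D (PDia K \<psi>) s) s" using good_sat[OF g s(1)] PDia by simp
    then have "sat T V D \<psi> (sig T V D (PDia K \<psi>) s) s'" using diaf_prop s(2) by metis
    then show "\<exists>\<tau>. sat T V D \<psi> \<tau> s'" by (rule exI)
  qed
  moreover have "c = build T V (diaf T V D K \<psi> ` S) D \<psi>" using c PDia by simp
  ultimately show ?thesis using Kd_buildI by metis
next
  case (PAll \<phi> \<psi>)
  have gd: "gdl D \<phi>" "gdl D \<psi>" using gdl_sub2[OF good_gdl[OF g]] PAll by auto
  have "good T V (gl T S (allg T V D \<phi> \<psi>)) D \<phi>"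
  proof (rule goodI[OF gd(1)])
    fix s' assume "s' \<in> gl T S (allg T V D \<phi> \<psi>)"
    then obtain s \<delta> where s: "s \<in> S" "\<delta> \<in> delays T s" "allg T V D \<phi> \<psi> s \<delta> < \<delta>"
      "s' = succ T s (allg T V D \<phi> \<psi> s \<delta>)" unfolding gl_def by blast
    have "sat T V D (PAll \<phi> \<psi>) (sig T V D (PAll \<phi> \<psi>) s) s" using good_sat[OF g s(1)] PAll by simp
    from allg_props[OF tts this s(2)] s(3,4) show "\<exists>\<tau>. sat T V D \<phi> \<tau> s'" by blast
  qed
  moreover have "good T V (ge T S (allg T V D \<phi> \<psi>)) D \<psi>"
  proof (rule goodI[OF gd(2)])
    fix s' assume "s' \<in> ge T S (allg T V D \<phi> \<psi>)"
    then obtain s \<delta> where s: "s \<in> S" "\<delta> \<in> delays T s" "allg T V D \<phi> \<psi> s \<delta> = \<delta>"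
      "s' = succ T s (allg T V D \<phi> \<psi> s \<delta>)" unfolding ge_def by blast
    have "sat T V D (PAll \<phi> \<psi>) (sig T V D (PAll \<phi> \<psi>) s) s" using good_sat[OF g s(1)] PAll by simp
    from allg_props[OF tts this s(2)] s(3,4) show "\<exists>\<tau>. sat T V D \<psi> \<tau> s'" by auto
  qed
  moreover have "c = build T V (gl T S (allg T V D \<phi> \<psi>)) D \<phi> \<or> c = build T V (ge T S (allg T V D \<phi> \<psi>)) D \<psi>"
    using c PAll by simp
  ultimately show ?thesis using Kd_buildI by metis
next
  case (PEx \<phi> \<psi>)
  have gd: "gdl D \<phi>" "gdl D \<psi>" using gdl_sub2[OF good_gdl[OF g]] PEx by auto
  have "good T V (\<Union>s\<in>S. succ_lt T s (exf T V D \<phi> \<psi> s)) D \<phi>"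
  proof (rule goodI[OF gd(1)])
    fix s' assume "s' \<in> (\<Union>s\<in>S. succ_lt T s (exf T V D \<phi> \<psi> s))"
    then obtain s where s: "s \<in> S" "s' \<in> succ_lt T s (exf T V D \<phi> \<psi> s)" by blast
    have "sat T V D (PEx \<phi> \<psi>) (sig T V D (PEx \<phi> \<psi>) s) s" using good_sat[OF g s(1)] PEx by simp
    from exf_prop[OF this] s(2) show "\<exists>\<tau>. sat T V D \<phi> \<tau> s'" by blast
  qed
  moreover have "good T V ((\<lambda>s. succ T s (exf T V D \<phi> \<psi> s)) ` S) D \<psi>"
  proof (rule goodI[OF gd(2)])
    fix s' assume "s' \<in> (\<lambda>s. succ T s (exf T V D \<phi> \<psi> s)) ` S"
    then obtain s where s: "s \<in> S" "s' = succ T s (exf T V D \<phi> \<psi> s)" by blast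
    have "sat T V D (PEx \<phi> \<psi>) (sig T V D (PEx \<phi> \<psi>) s) s" using good_sat[OF g s(1)] PEx by simp
    from exf_prop[OF this] s(2) show "\<exists>\<tau>. sat T V D \<psi> \<tau> s'" by blast
  qed
  moreover have "c = build T V (\<Union>s\<in>S. succ_lt T s (exf T V D \<phi> \<psi> s)) D \<phi> \<or>
      c = build T V ((\<lambda>s. succ T s (exf T V D \<phi> \<psi> s)) ` S) D \<psi>"
    using c PEx by simp
  ultimately show ?thesis using Kd_buildI by metis
next
  case (PNu Z \<psi>)
  then have "c = fixchild T V S D \<Phi> Z \<psi>" using c build_fix[of \<Phi> Z \<psi>] by simp
  then show ?thesis using g PNu unfolding Kd_def by blast
next
  case (PMu Z \<psi>)
  then have "c = fixchild T V S D \<Phi> Z \<psi>" using c build_fix[of \<Phi> Z \<psi>] by simp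
  then show ?thesis using g PMu unfolding Kd_def by blast
qed

lemma Kd_child:
  assumes tts: "is_TTS T" and k: "Kd T V n" and c: "c \<in> set (tC n)"
  shows "Kd T V c"
proof -
  from k[unfolded Kd_def] consider
    (B) S D \<Phi> where "good T V S D \<Phi>" "n = build T V S D \<Phi>"
  | (F) S D \<Phi> Z \<psi> where "good T V S D \<Phi>" "\<Phi> = PNu Z \<psi> \<or> \<Phi> = PMu Z \<psi>" "n = fixchild T V S D \<Phi> Z \<psi>"
  | (U) D \<Phi> Z \<psi> where "gdl D \<Phi>" "\<Phi> = PNu Z \<psi> \<or> \<Phi> = PMu Z \<psi>" "n = unnode T V D \<Phi> Z \<psi>"
    by blast
  then show ?thesis
  proof cases
  case B
  then show "Kd T V c" using Kd_build_child[OF tts] c by blast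
next
  case (F S D \<Phi> Z \<psi>)
  note g = F(1) and P = F(2) and n = F(3)
  have "c = unnode T V D \<Phi> Z \<psi>" using c n by simp
  then show "Kd T V c" using good_gdl[OF g] P unfolding Kd_def by blast
next
  case (U D \<Phi> Z \<psi>)
  note g = U(1) and P = U(2) and n = U(3)
  have cc: "c = build T V (Ax T V D \<Phi>) (Dx D \<Phi>) (psubst Z (Ux D \<Phi>) \<psi>)" using c n by simp
  have "good T V (Ax T V D \<Phi>) (Dx D \<Phi>) (psubst Z (Ux D \<Phi>) \<psi>)"
  proof (rule goodI)
    show "gdl (Dx D \<Phi>) (psubst Z (Ux D \<Phi>) \<psi>)" by (rule gdl_Dx(2)[OF g P])
    fix s assume "s \<in> Ax T V D \<Phi>"
    then obtain \<tau> where "sat T V (Dx D \<Phi>) (PVar (Ux D \<Phi>)) \<tau> s" unfolding Ax_def Aset_def by blast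
    from un_sat[OF g P this] show "\<exists>\<tau>. sat T V (Dx D \<Phi>) (psubst Z (Ux D \<Phi>) \<psi>) \<tau> s" by blast
  qed
  then show "Kd T V c" using cc unfolding Kd_def by blast
qed
qed




lemma tR_build: "tR (build T V S D \<Phi>) \<noteq> Some R_Un" "tR (build T V S D \<Phi>) \<noteq> Some R_Thin"
  by (cases \<Phi>; simp)+

lemma tC_build_nil: "tC (build T V S D \<Phi>) = [] \<longleftrightarrow> (\<exists>Z. \<Phi> = PVar Z \<or> \<Phi> = PNegVar Z)"
  by (cases \<Phi>; simp)

lemma tR_build_leaf: "tC (build T V S D \<Phi>) = [] \<Longrightarrow> tR (build T V S D \<Phi>) = None"
  by (cases \<Phi>; simp)

lemma Kd_cases:
  assumes "Kd T V n"
  obtains (B) S D \<Phi> where "good T V S D \<Phi>" "n = build T V S D \<Phi>"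
  | (F) S D \<Phi> Z \<psi> where "good T V S D \<Phi>" "\<Phi> = PNu Z \<psi> \<or> \<Phi> = PMu Z \<psi>" "n = fixchild T V S D \<Phi> Z \<psi>"
  | (U) D \<Phi> Z \<psi> where "gdl D \<Phi>" "\<Phi> = PNu Z \<psi> \<or> \<Phi> = PMu Z \<psi>" "n = unnode T V D \<Phi> Z \<psi>"
  using assms unfolding Kd_def by blast

definition pD :: "('s, 'a) tab \<Rightarrow> 'a deflist" where
  "pD n = (if tR n = Some R_Thin \<or> tR n = Some R_Un then butlast (tD n) else tD n)"

lemma Dx_butlast[simp]: "butlast (Dx D \<Phi>) = D" unfolding Dx_def by simp

lemma pD_build[simp]: "pD (build T V S D \<Phi>) = D"
  unfolding pD_def using tR_build[of T V S D \<Phi>] by simp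
lemma pD_fixchild[simp]: "pD (fixchild T V S D \<Phi> Z \<psi>) = D"
  unfolding pD_def by simp
lemma pD_unnode[simp]: "pD (unnode T V D \<Phi> Z \<psi>) = D"
  unfolding pD_def by simp

lemma map_of_snoc: "U \<notin> fst ` set D \<Longrightarrow> map_of (D @ [(U, \<Phi>)]) U = Some \<Phi>"
  by (induction D) auto

lemma map_of_Dx: "Ux D \<Phi> \<notin> fst ` set D \<Longrightarrow> map_of (Dx D \<Phi>) (Ux D \<Phi>) = Some \<Phi>"
  unfolding Dx_def by (rule map_of_snoc)

lemma dom_Dx: "fst ` set (Dx D \<Phi>) = insert (Ux D \<Phi>) (fst ` set D)"
  unfolding Dx_def by auto

lemma Ux_notin: "Ux D \<Phi> \<notin> fst ` set D"
  using freshU[of D \<Phi>] unfolding Ux_def fresh_def by auto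

lemma build_children_D:
  assumes "c \<in> set (tC (build T V S D \<Phi>))" "tR (build T V S D \<Phi>) \<noteq> Some R_Fix"
  shows "tD c = D \<and> (\<exists>S' \<Phi>'. c = build T V S' D \<Phi>')"
  using assms by (cases \<Phi>) auto

lemma build_fix_child:
  assumes "c \<in> set (tC (build T V S D \<Phi>))" "tR (build T V S D \<Phi>) = Some R_Fix"
  shows "\<exists>Z \<psi>. (\<Phi> = PNu Z \<psi> \<or> \<Phi> = PMu Z \<psi>) \<and> c = fixchild T V S D \<Phi> Z \<psi>"
proof (cases \<Phi>)
  case (PNu Z \<psi>)
  then show ?thesis using assms build_fix[of \<Phi> Z \<psi>] by auto
next
  case (PMu Z \<psi>)
  then show ?thesis using assms build_fix[of \<Phi> Z \<psi>] by auto
qed (use assms in auto)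

lemma Kd_prefix:
  assumes "Kd T V n" "c \<in> set (tC n)"
  shows "\<exists>E. tD c = tD n @ E"
  using assms(1)
proof (cases rule: Kd_cases)
  case (B S D \<Phi>)
  show ?thesis
  proof (cases "tR n = Some R_Fix")
    case True
    then obtain Z \<psi> where "c = fixchild T V S D \<Phi> Z \<psi>" using build_fix_child assms(2) B by blast
    then show ?thesis using B by (simp add: Dx_def del: build.simps)
  next
    case False
    then have "tD c = D" using build_children_D assms(2) B by blast
    then have "tD c = tD n @ []" using B by (simp del: build.simps)
    then show ?thesis by (rule exI)
  qed
next
  case (F S D \<Phi> Z \<psi>)
  then show ?thesis using assms(2) by simp
next
  case (U D \<Phi> Z \<psi>)
  then show ?thesis using assms(2) by simp
qed

lemma Kd_pD:
  assumes "Kd T V n" "c \<in> set (tC n)" "tR n \<noteq> Some R_Un"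
  shows "pD c = pD n"
  using assms(1)
proof (cases rule: Kd_cases)
  case (B S D \<Phi>)
  show ?thesis
  proof (cases "tR n = Some R_Fix")
    case True
    then obtain Z \<psi> where "c = fixchild T V S D \<Phi> Z \<psi>" using build_fix_child assms(2) B by blast
    then show ?thesis using B by simp
  next
    case False
    then obtain S' \<Phi>' where "c = build T V S' D \<Phi>'" using build_children_D assms(2) B by blast
    then show ?thesis using B by (simp del: build.simps)
  qed
next
  case (F S D \<Phi> Z \<psi>)
  then show ?thesis using assms(2) by simp
next
  case (U D \<Phi> Z \<psi>)
  then show ?thesis using assms(3) by simp
qed

lemma Kd_Un:
  assumes "Kd T V n" "c \<in> set (tC n)" "tR n = Some R_Un"
  shows "\<exists>U0. tF n = PVar U0 \<and> fst ` set (pD c) = insert U0 (fst ` set (pD n)) \<and> U0 \<notin> fst ` set (pD n)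
     \<and> tS n = Aset T V (tD n) U0 \<and> U0 \<in> fst ` set (tD n) \<and> pD c = tD n"
  using assms(1)
proof (cases rule: Kd_cases)
  case (B S D \<Phi>)
  then show ?thesis using assms(3) tR_build[of T V S D \<Phi>] by simp
next
  case (F S D \<Phi> Z \<psi>)
  then show ?thesis using assms(3) by simp
next
  case (U D \<Phi> Z \<psi>)
  have c: "c = build T V (Ax T V D \<Phi>) (Dx D \<Phi>) (psubst Z (Ux D \<Phi>) \<psi>)" using assms(2) U(3) by simp
  have "tF n = PVar (Ux D \<Phi>)" "pD c = Dx D \<Phi>" "pD n = D" "tD n = Dx D \<Phi>" "tS n = Ax T V D \<Phi>"
    using U(3) c by (simp_all del: build.simps)
  then show ?thesis using Ux_notin[of D \<Phi>] dom_Dx[of D \<Phi>] unfolding Ax_def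
    by (intro exI[of _ "Ux D \<Phi>"]) simp
qed

lemma Kd_Un_map:
  assumes "Kd T V n" "tR n = Some R_Un" "tF n = PVar U"
  shows "map_of (tD n) U \<noteq> None \<and> U \<in> fst ` set (tD n)"
  using assms(1)
proof (cases rule: Kd_cases)
  case (B S D \<Phi>)
  then show ?thesis using assms(2) tR_build[of T V S D \<Phi>] by simp
next
  case (F S D \<Phi> Z \<psi>)
  then show ?thesis using assms(2) by simp
next
  case (U D \<Phi> Z \<psi>)
  have "U = Ux D \<Phi>" "tD n = Dx D \<Phi>" using U(3) assms(3) by simp_all
  moreover have "map_of (Dx D \<Phi>) (Ux D \<Phi>) = Some \<Phi>" by (rule map_of_Dx[OF Ux_notin])
  ultimately show ?thesis using dom_Dx[of D \<Phi>] by simp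
qed

lemma Kd_wf_sequent: assumes "Kd T V n" shows "wf_sequent (tD n) (tF n)"
  using assms
proof (cases rule: Kd_cases)
  case (B S D \<Phi>)
  then have "gdl D \<Phi>" by (simp add: good_gdl)
  then show ?thesis using B(2) gdl_wf_sequent by (simp del: build.simps)
next
  case (F S D \<Phi> Z \<psi>)
  then have "gdl (Dx D \<Phi>) (PVar (Ux D \<Phi>))" using gdl_Dx(1) good_gdl by blast
  then show ?thesis using F(3) gdl_wf_sequent by simp
next
  case (U D \<Phi> Z \<psi>)
  then have "gdl (Dx D \<Phi>) (PVar (Ux D \<Phi>))" using gdl_Dx(1) by blast
  then show ?thesis using U(3) gdl_wf_sequent by simp
qed

lemma Kd_distinct: "Kd T V n \<Longrightarrow> distinct (map fst (tD n))"
  using Kd_wf_sequent unfolding wf_sequent_def wf_deflist_def by blast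

lemma Kd_leaf:
  assumes "Kd T V n" "tC n = []"
  shows "tR n = None \<and> (\<exists>Z. tF n = PVar Z \<or> tF n = PNegVar Z) \<and> good T V (tS n) (tD n) (tF n)"
  using assms(1)
proof (cases rule: Kd_cases)
  case (B S D \<Phi>)
  have "tC (build T V S D \<Phi>) = []" using assms(2) B(2) by simp
  then have "(\<exists>Z. \<Phi> = PVar Z \<or> \<Phi> = PNegVar Z)" "tR (build T V S D \<Phi>) = None"
    using tC_build_nil tR_build_leaf by blast+
  then show ?thesis using B by (simp del: build.simps)
next
  case (F S D \<Phi> Z \<psi>)
  then show ?thesis using assms(2) by simp
next
  case (U D \<Phi> Z \<psi>)
  then show ?thesis using assms(2) by simp
qed

lemma seq_of_build[simp]: "seq_of (build T V S D \<Phi>) = (S, D, \<Phi>)"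
  unfolding seq_of_def by simp

lemma Kd_rule_ok:
  assumes tts: "is_TTS T" and k: "Kd T V n" and ne: "tC n \<noteq> []"
  shows "\<exists>r. tR n = Some r \<and> rule_ok T r (tS n) (tD n) (tF n) (map seq_of (tC n))"
  using k
proof (cases rule: Kd_cases)
  case (B S D \<Phi>)
  note g = B(1)
  show ?thesis
  proof (cases \<Phi>)
    case (PVar Z) then show ?thesis using ne B by simp
  next
    case (PNegVar Z) then show ?thesis using ne B by simp
  next
    case (PAnd \<phi> \<psi>) then show ?thesis using B by (simp add: rule_ok_def)
  next
    case (POr \<phi> \<psi>)
    have "S = orS T V S D \<phi> \<psi> \<union> (S - orS T V S D \<phi> \<psi>)" unfolding orS_def by auto
    then show ?thesis using B POr unfolding rule_ok_def by auto
  next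
    case (PBox K \<psi>) then show ?thesis using B by (simp add: rule_ok_def)
  next
    case (PDia K \<psi>)
    have "\<forall>s\<in>S. ksucc T s K (diaf T V D K \<psi> s)"
    proof
      fix s assume "s \<in> S"
      then have "sat T V D (PDia K \<psi>) (sig T V D \<Phi> s) s" using good_sat[OF g] PDia by simp
      from diaf_prop[OF this] show "ksucc T s K (diaf T V D K \<psi> s)" by (rule conjunct1)
    qed
    then show ?thesis using B PDia by (simp add: rule_ok_def)
  next
    case (PAll \<phi> \<psi>)
    have "\<forall>s\<in>S. \<forall>\<delta>\<in>delays T s. 0 \<le> allg T V D \<phi> \<psi> s \<delta> \<and> allg T V D \<phi> \<psi> s \<delta> \<le> \<delta>"
    proof (intro ballI)
      fix s \<delta> assume "s \<in> S" "\<delta> \<in> delays T s"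
      have "sat T V D (PAll \<phi> \<psi>) (sig T V D \<Phi> s) s" using good_sat[OF g \<open>s \<in> S\<close>] PAll by simp
      from allg_props[OF tts this \<open>\<delta> \<in> delays T s\<close>]
      show "0 \<le> allg T V D \<phi> \<psi> s \<delta> \<and> allg T V D \<phi> \<psi> s \<delta> \<le> \<delta>" by blast
    qed
    then show ?thesis using B PAll by (simp add: rule_ok_def gl_def ge_def)
  next
    case (PEx \<phi> \<psi>)
    have "\<forall>s\<in>S. exf T V D \<phi> \<psi> s \<in> delays T s"
    proof
      fix s assume "s \<in> S"
      then have "sat T V D (PEx \<phi> \<psi>) (sig T V D \<Phi> s) s" using good_sat[OF g] PEx by simp
      from exf_prop[OF this] show "exf T V D \<phi> \<psi> s \<in> delays T s" by (rule conjunct1)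
    qed
    then show ?thesis using B PEx by (simp add: rule_ok_def)
  next
    case (PNu Z \<psi>)
    have "fresh (Ux D \<Phi>) D \<Phi>" unfolding Ux_def by (rule freshU)
    then show ?thesis using B PNu by (simp add: rule_ok_def Dx_def seq_of_def)
  next
    case (PMu Z \<psi>)
    have "fresh (Ux D \<Phi>) D \<Phi>" unfolding Ux_def by (rule freshU)
    then show ?thesis using B PMu by (simp add: rule_ok_def Dx_def seq_of_def)
  qed
next
  case (F S D \<Phi> Z \<psi>)
  have "S \<subseteq> Ax T V D \<Phi>"
  proof
    fix s assume "s \<in> S"
    then have "sat T V D \<Phi> (sig T V D \<Phi> s) s" using good_sat[OF F(1)] by blast
    from fix_sat[OF F(2) this] obtain \<alpha> where "sat T V (Dx D \<Phi>) (PVar (Ux D \<Phi>)) (sig T V D \<Phi> s @ [\<alpha>]) s"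
      by (elim exE)
    then show "s \<in> Ax T V D \<Phi>" unfolding Ax_def Aset_def by blast
  qed
  then show ?thesis using F by (simp add: rule_ok_def seq_of_def unnode_def)
next
  case (U D \<Phi> Z \<psi>)
  have "map_of (Dx D \<Phi>) (Ux D \<Phi>) = Some \<Phi>" by (rule map_of_Dx[OF Ux_notin])
  then show ?thesis using U unfolding rule_ok_def by auto
qed




definition steprel :: "('s, 'a) tts \<Rightarrow> ('s, 'a) tab \<Rightarrow> nat \<Rightarrow> 's \<Rightarrow> 's \<Rightarrow> bool" where
  "steprel T n i s' s \<longleftrightarrow>
     (case tR n of
        Some R_Box \<Rightarrow> ksucc T s (boxK (tF n)) s'
      | Some (R_Dia f) \<Rightarrow> s' = f s
      | Some (R_Ex f) \<Rightarrow> (if i = 0 then s' \<in> succ_lt T s (f s) else s' = succ T s (f s))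
      | Some (R_All g) \<Rightarrow> (\<exists>\<delta>\<in>delays T s. s' = succ T s (g s \<delta>) \<and>
                             (if i = 0 then g s \<delta> < \<delta> else g s \<delta> = \<delta>))
      | _ \<Rightarrow> s' = s)"

definition sigN :: "('s, 'a) tts \<Rightarrow> (nat \<Rightarrow> 's set) \<Rightarrow> ('s, 'a) tab \<Rightarrow> 's \<Rightarrow> 's set list" where
  "sigN T V n s = sig T V (tD n) (tF n) s"

definition isMu :: "('s, 'a) tab \<Rightarrow> bool" where
  "isMu n \<longleftrightarrow> tR n = Some R_Un \<and> (\<exists>U Z \<psi>. tF n = PVar U \<and> map_of (tD n) U = Some (PMu Z \<psi>))"

lemma cand: "sat T V D \<phi> \<tau> s' \<Longrightarrow> LE (take (length D) (sig T V D \<phi> s')) \<tau>"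
  using sig_props(2) by simp

lemma less2: "i < length [a, b] \<Longrightarrow> i = 0 \<or> i = 1" by auto

lemma step_local_build:
  assumes tts: "is_TTS T" and g: "good T V S D \<Phi>" and n: "n = build T V S D \<Phi>"
    and i: "i < length (tC n)" and s: "s \<in> tS n" and s': "s' \<in> tS (tC n ! i)"
    and r: "steprel T n i s' s"
  shows "LE (take (length (tD n)) (sigN T V (tC n ! i) s')) (sigN T V n s) \<and>
     (isMu n \<longrightarrow> LL (take (length (tD n)) (sigN T V (tC n ! i) s')) (sigN T V n s))"
proof -
  have nmu: "\<not> isMu n" unfolding isMu_def n using tR_build by blast
  have sS: "s \<in> S" using s n by simp
  let ?\<tau> = "sig T V D \<Phi> s"
  have st: "sat T V D \<Phi> ?\<tau> s" by (rule good_sat[OF g sS])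
  have sN: "sigN T V n s = ?\<tau>" unfolding sigN_def n by simp
  have dn: "tD n = D" unfolding n by simp
  have main: "LE (take (length D) (sigN T V (tC n ! i) s')) ?\<tau>"
  proof (cases \<Phi>)
    case (PVar Z) then show ?thesis using i n by simp
  next
    case (PNegVar Z) then show ?thesis using i n by simp
  next
    case (PAnd \<phi> \<psi>)
    have e: "s' = s" using r n PAnd unfolding steprel_def by simp
    have "i = 0 \<or> i = 1" using i n PAnd by auto
    then show ?thesis
    proof
      assume "i = 0"
      then have "sigN T V (tC n ! i) s' = sig T V D \<phi> s'" unfolding sigN_def using n PAnd by simp
      moreover have "sat T V D \<phi> ?\<tau> s'" using st e PAnd by (simp add: sat_def)
      ultimately show ?thesis using cand by metis
    next
      assume "i = 1"
      then have "sigN T V (tC n ! i) s' = sig T V D \<psi> s'" unfolding sigN_def using n PAnd by simp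
      moreover have "sat T V D \<psi> ?\<tau> s'" using st e PAnd by (simp add: sat_def)
      ultimately show ?thesis using cand by metis
    qed
  next
    case (POr \<phi> \<psi>)
    have e: "s' = s" using r n POr unfolding steprel_def by simp
    have "i = 0 \<or> i = 1" using i n POr by auto
    then show ?thesis
    proof
      assume i0: "i = 0"
      then have "sigN T V (tC n ! i) s' = sig T V D \<phi> s'" unfolding sigN_def using n POr by simp
      moreover have "s' \<in> orS T V S D \<phi> \<psi>" using s' i0 n POr by simp
      then have "sat T V D \<phi> ?\<tau> s'" unfolding orS_def POr using e by simp
      ultimately show ?thesis using cand by metis
    next
      assume i1: "i = 1"
      then have "sigN T V (tC n ! i) s' = sig T V D \<psi> s'" unfolding sigN_def using n POr by simp
      moreover have "s' \<notin> orS T V S D \<phi> \<psi>" using s' i1 n POr by simp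
      then have "\<not> sat T V D \<phi> ?\<tau> s'" using sS e unfolding orS_def POr by simp
      then have "sat T V D \<psi> ?\<tau> s'" using st e POr sat_Or by metis
      ultimately show ?thesis using cand by metis
    qed
  next
    case (PBox K \<psi>)
    have e: "ksucc T s K s'" using r n PBox unfolding steprel_def by simp
    have "sigN T V (tC n ! i) s' = sig T V D \<psi> s'" unfolding sigN_def using n PBox i by simp
    moreover have "sat T V D \<psi> ?\<tau> s'" using st e PBox sat_Box by metis
    ultimately show ?thesis using cand by metis
  next
    case (PDia K \<psi>)
    have e: "s' = diaf T V D K \<psi> s" using r n PDia unfolding steprel_def by simp
    have "sigN T V (tC n ! i) s' = sig T V D \<psi> s'" unfolding sigN_def using n PDia i by simp
    moreover have "sat T V D (PDia K \<psi>) ?\<tau> s" using st PDia by simp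
    then have "sat T V D \<psi> ?\<tau> s'" using diaf_prop e PDia by metis
    ultimately show ?thesis using cand by metis
  next
    case (PAll \<phi> \<psi>)
    have st': "sat T V D (PAll \<phi> \<psi>) (sig T V D (PAll \<phi> \<psi>) s) s" using st PAll by simp
    have "i = 0 \<or> i = 1" using i n PAll by auto
    then show ?thesis
    proof
      assume i0: "i = 0"
      then obtain \<delta> where d: "\<delta> \<in> delays T s" "s' = succ T s (allg T V D \<phi> \<psi> s \<delta>)"
        "allg T V D \<phi> \<psi> s \<delta> < \<delta>"
        using r n PAll unfolding steprel_def by auto
      have "sigN T V (tC n ! i) s' = sig T V D \<phi> s'" unfolding sigN_def using n PAll i0 by simp
      moreover have "sat T V D \<phi> ?\<tau> s'" using allg_props[OF tts st' d(1)] d PAll by simp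
      ultimately show ?thesis using cand by metis
    next
      assume i1: "i = 1"
      then obtain \<delta> where d: "\<delta> \<in> delays T s" "s' = succ T s (allg T V D \<phi> \<psi> s \<delta>)"
        "allg T V D \<phi> \<psi> s \<delta> = \<delta>"
        using r n PAll unfolding steprel_def by auto
      have "sigN T V (tC n ! i) s' = sig T V D \<psi> s'" unfolding sigN_def using n PAll i1 by simp
      moreover have "sat T V D \<psi> ?\<tau> s'" using allg_props[OF tts st' d(1)] d PAll by simp
      ultimately show ?thesis using cand by metis
    qed
  next
    case (PEx \<phi> \<psi>)
    have st': "sat T V D (PEx \<phi> \<psi>) (sig T V D (PEx \<phi> \<psi>) s) s" using st PEx by simp
    note ep = exf_prop[OF st']
    have "i = 0 \<or> i = 1" using i n PEx by auto
    then show ?thesis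
    proof
      assume i0: "i = 0"
      then have d: "s' \<in> succ_lt T s (exf T V D \<phi> \<psi> s)" using r n PEx unfolding steprel_def by auto
      have "sigN T V (tC n ! i) s' = sig T V D \<phi> s'" unfolding sigN_def using n PEx i0 by simp
      moreover have "sat T V D \<phi> ?\<tau> s'" using ep d PEx by simp
      ultimately show ?thesis using cand by metis
    next
      assume i1: "i = 1"
      then have d: "s' = succ T s (exf T V D \<phi> \<psi> s)" using r n PEx unfolding steprel_def by auto
      have "sigN T V (tC n ! i) s' = sig T V D \<psi> s'" unfolding sigN_def using n PEx i1 by simp
      moreover have "sat T V D \<psi> ?\<tau> s'" using ep d PEx by simp
      ultimately show ?thesis using cand by metis
    qed
  next
    case (PNu Z \<psi>)
    have P: "\<Phi> = PNu Z \<psi> \<or> \<Phi> = PMu Z \<psi>" using PNu by simp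
    have tc: "tC n = [fixchild T V S D \<Phi> Z \<psi>]" unfolding n by (subst build_fix[OF P]) simp
    then have c: "tC n ! i = fixchild T V S D \<Phi> Z \<psi>" using i by simp
    have e: "s' = s" using r n PNu unfolding steprel_def by simp
    obtain \<alpha> where a: "sat T V (Dx D \<Phi>) (PVar (Ux D \<Phi>)) (?\<tau> @ [\<alpha>]) s" using fix_sat[OF P st] by blast
    have "LE (sig T V (Dx D \<Phi>) (PVar (Ux D \<Phi>)) s) (?\<tau> @ [\<alpha>])" by (rule sig_props(2)[OF a])
    then have "LE (take (length D) (sig T V (Dx D \<Phi>) (PVar (Ux D \<Phi>)) s)) (take (length D) (?\<tau> @ [\<alpha>]))"
      by (rule lexle_take)
    then show ?thesis using c e sat_len[OF st] unfolding sigN_def by simp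
  next
    case (PMu Z \<psi>)
    have P: "\<Phi> = PNu Z \<psi> \<or> \<Phi> = PMu Z \<psi>" using PMu by simp
    have tc: "tC n = [fixchild T V S D \<Phi> Z \<psi>]" unfolding n by (subst build_fix[OF P]) simp
    then have c: "tC n ! i = fixchild T V S D \<Phi> Z \<psi>" using i by simp
    have e: "s' = s" using r n PMu unfolding steprel_def by simp
    obtain \<alpha> where a: "sat T V (Dx D \<Phi>) (PVar (Ux D \<Phi>)) (?\<tau> @ [\<alpha>]) s" using fix_sat[OF P st] by blast
    have "LE (sig T V (Dx D \<Phi>) (PVar (Ux D \<Phi>)) s) (?\<tau> @ [\<alpha>])" by (rule sig_props(2)[OF a])
    then have "LE (take (length D) (sig T V (Dx D \<Phi>) (PVar (Ux D \<Phi>)) s)) (take (length D) (?\<tau> @ [\<alpha>]))"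
      by (rule lexle_take)
    then show ?thesis using c e sat_len[OF st] unfolding sigN_def by simp
  qed
  then show ?thesis using nmu sN dn by simp
qed

lemma step_local:
  assumes tts: "is_TTS T" and k: "Kd T V n"
    and i: "i < length (tC n)" and s: "s \<in> tS n" and s': "s' \<in> tS (tC n ! i)"
    and r: "steprel T n i s' s"
  shows "LE (take (length (tD n)) (sigN T V (tC n ! i) s')) (sigN T V n s) \<and>
     (isMu n \<longrightarrow> LL (take (length (tD n)) (sigN T V (tC n ! i) s')) (sigN T V n s))"
  using k
proof (cases rule: Kd_cases)
  case (B S D \<Phi>)
  then show ?thesis using step_local_build[OF tts B(1) B(2) i s s' r] by blast
next
  case (F S D \<Phi> Z \<psi>)
  have c: "tC n ! i = unnode T V D \<Phi> Z \<psi>" using F(3) i by simp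
  have e: "s' = s" using r F(3) unfolding steprel_def by simp
  have nmu: "\<not> isMu n" unfolding isMu_def F(3) by simp
  have "take (length (tD n)) (sigN T V (tC n ! i) s') = sigN T V n s"
    using c unfolding e sigN_def by (simp add: F(3))
  then show ?thesis using nmu by simp
next
  case (U D \<Phi> Z \<psi>)
  let ?c = "build T V (Ax T V D \<Phi>) (Dx D \<Phi>) (psubst Z (Ux D \<Phi>) \<psi>)"
  have c: "tC n ! i = ?c" using U(3) i by simp
  have e: "s' = s" using r U(3) unfolding steprel_def by simp
  have sA: "s \<in> Aset T V (Dx D \<Phi>) (Ux D \<Phi>)" using s U(3) by (simp add: Ax_def)
  then obtain \<tau>0 where "sat T V (Dx D \<Phi>) (PVar (Ux D \<Phi>)) \<tau>0 s" unfolding Aset_def by blast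
  then have st: "sat T V (Dx D \<Phi>) (PVar (Ux D \<Phi>)) (sigN T V n s) s"
    unfolding sigN_def U(3) by (simp add: sig_sat)
  from un_sat[OF U(1) U(2) st] obtain \<tau>' where t: "sat T V (Dx D \<Phi>) (psubst Z (Ux D \<Phi>) \<psi>) \<tau>' s"
    "LE \<tau>' (sigN T V n s)" "\<Phi> = PMu Z \<psi> \<longrightarrow> LL \<tau>' (sigN T V n s)" by blast
  have le: "LE (sigN T V ?c s) \<tau>'" unfolding sigN_def by (simp add: sig_props(2)[OF t(1)] del: build.simps)
  have tk: "take (length (tD n)) (sigN T V (tC n ! i) s') = sigN T V ?c s"
    using c unfolding e sigN_def by (simp add: U(3) del: build.simps)
  have mu: "isMu n \<Longrightarrow> \<Phi> = PMu Z \<psi>"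
  proof -
    assume "isMu n"
    then obtain Z' \<psi>' where "map_of (Dx D \<Phi>) (Ux D \<Phi>) = Some (PMu Z' \<psi>')"
      unfolding isMu_def U(3) by auto
    moreover have "map_of (Dx D \<Phi>) (Ux D \<Phi>) = Some \<Phi>" by (rule map_of_Dx[OF Ux_notin])
    ultimately have "\<Phi> = PMu Z' \<psi>'" by simp
    then show "\<Phi> = PMu Z \<psi>" using U(2) by auto
  qed
  show ?thesis unfolding tk using le t(2,3) mu LE_trans LE_LL_trans by blast
qed




lemma subt_snoc: "subt t (p @ [i]) = (case subt t p of None \<Rightarrow> None
   | Some n \<Rightarrow> (if i < length (tC n) then Some (tC n ! i) else None))"
  by (induction p arbitrary: t) (auto split: option.splits)

lemma subt_append_valid: "subt t (p @ q) \<noteq> None \<Longrightarrow> subt t p \<noteq> None"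
  by (induction p arbitrary: t) (auto split: if_splits)

lemma valid_snoc:
  assumes "valid t (p @ [i])"
  shows "valid t p" "i < length (nC t p)" "the (subt t (p @ [i])) = nC t p ! i"
proof -
  show vp: "valid t p" using assms subt_append_valid unfolding valid_def by blast
  then obtain n where n: "subt t p = Some n" unfolding valid_def by auto
  show "i < length (nC t p)" using assms n unfolding valid_def nC_def by (auto simp: subt_snoc split: if_splits)
  then show "the (subt t (p @ [i])) = nC t p ! i" using n unfolding nC_def by (simp add: subt_snoc)
qed

lemma valid_prefix: "valid t (m @ q) \<Longrightarrow> valid t m"
  unfolding valid_def using subt_append_valid by blast

lemma below_snoc: "below m (p @ [i]) \<longleftrightarrow> below m p \<or> m = p"
proof
  assume "below m (p @ [i])"
  then obtain q where q: "q \<noteq> []" "p @ [i] = m @ q" unfolding below_def by blast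
  have qq: "q = butlast q @ [last q]" using q(1) by simp
  have "p @ [i] = (m @ butlast q) @ [last q]" using q(2) qq by (metis append.assoc)
  then have pe: "p = m @ butlast q" by (rule append1_eq_conv[THEN iffD1, THEN conjunct1])
  show "below m p \<or> m = p"
  proof (cases "butlast q = []")
    case True then show ?thesis using pe by simp
  next
    case False then show ?thesis using pe unfolding below_def by blast
  qed
next
  assume "below m p \<or> m = p"
  then show "below m (p @ [i])"
  proof
    assume "below m p"
    then obtain q where "q \<noteq> []" "p = m @ q" unfolding below_def by blast
    then show ?thesis unfolding below_def by (intro exI[of _ "q @ [i]"]) simp
  next
    assume "m = p"
    then show ?thesis unfolding below_def by (intro exI[of _ "[i]"]) simp
  qed
qed

lemma below_Nil[simp]: "\<not> below m []"
  unfolding below_def by simp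

lemma below_neq: "below m n \<Longrightarrow> m \<noteq> n"
  unfolding below_def by auto

abbreviation nd :: "('s, 'a) tab \<Rightarrow> nat list \<Rightarrow> ('s, 'a) tab" where
  "nd t p \<equiv> the (subt t p)"

lemma Kd_all:
  assumes tts: "is_TTS T" and k: "Kd T V t"
  shows "valid t p \<Longrightarrow> Kd T V (nd t p)"
proof (induction p rule: rev_induct)
  case Nil then show ?case using k by simp
next
  case (snoc i p)
  note v = valid_snoc[OF snoc.prems]
  have "Kd T V (nd t p)" using snoc.IH v(1) by blast
  moreover have "nC t p ! i \<in> set (tC (nd t p))" using v(2) unfolding nC_def by simp
  ultimately show ?case using Kd_child[OF tts] v(3) by metis
qed

section \<open>Global invariant\<close>

definition G :: "('s, 'a) tts \<Rightarrow> (nat \<Rightarrow> 's set) \<Rightarrow> ('s, 'a) tab \<Rightarrow> nat list \<Rightarrow> bool" where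
  "G T V t p \<longleftrightarrow>
    (\<forall>m. below m p \<longrightarrow> valid t m \<and> (\<exists>E. nD t p = nD t m @ E)) \<and>
    (\<forall>m. below m p \<longrightarrow> nR t m = Some R_Un \<longrightarrow> (\<exists>U. nF t m = PVar U \<and> U \<in> fst ` set (pD (nd t p)))) \<and>
    (\<forall>U \<in> fst ` set (pD (nd t p)). \<exists>m. below m p \<and> valid t m \<and> nF t m = PVar U \<and> nR t m = Some R_Un \<and>
        nS t m = Aset T V (nD t m) U) \<and>
    (\<forall>m m'. below m p \<longrightarrow> below m' p \<longrightarrow> nR t m = Some R_Un \<longrightarrow> nR t m' = Some R_Un \<longrightarrow>
        nF t m = nF t m' \<longrightarrow> m = m')"

lemma G_all:
  assumes tts: "is_TTS T" and k: "Kd T V t" and root: "pD t = []"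
  shows "valid t p \<Longrightarrow> G T V t p"
proof (induction p rule: rev_induct)
  case Nil then show ?case unfolding G_def using root by simp
next
  case (snoc i p)
  note v = valid_snoc[OF snoc.prems]
  have Gp: "G T V t p" using snoc.IH v(1) by blast
  let ?n = "nd t p" and ?c = "nd t (p @ [i])"
  have kn: "Kd T V ?n" by (rule Kd_all[OF tts k v(1)])
  have cin: "?c \<in> set (tC ?n)" using v(2,3) unfolding nC_def by simp
  have nX: "nD t p = tD ?n" "nR t p = tR ?n" "nF t p = tF ?n" "nS t p = tS ?n"
    unfolding nD_def nR_def nF_def nS_def by simp_all
  have cX: "nD t (p @ [i]) = tD ?c" unfolding nD_def by simp
  obtain E0 where E0: "tD ?c = tD ?n @ E0" using Kd_prefix[OF kn cin] by blast
  have G1: "\<forall>m. below m p \<longrightarrow> valid t m \<and> (\<exists>E. nD t p = nD t m @ E)"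
   and G2: "\<forall>m. below m p \<longrightarrow> nR t m = Some R_Un \<longrightarrow> (\<exists>U. nF t m = PVar U \<and> U \<in> fst ` set (pD ?n))"
   and G3: "\<forall>U \<in> fst ` set (pD ?n). \<exists>m. below m p \<and> valid t m \<and> nF t m = PVar U \<and> nR t m = Some R_Un \<and>
        nS t m = Aset T V (nD t m) U"
   and G4: "\<forall>m m'. below m p \<longrightarrow> below m' p \<longrightarrow> nR t m = Some R_Un \<longrightarrow> nR t m' = Some R_Un \<longrightarrow>
        nF t m = nF t m' \<longrightarrow> m = m'"
    using Gp unfolding G_def by blast+
  have dom_sub: "fst ` set (pD ?n) \<subseteq> fst ` set (pD ?c)"
  proof (cases "tR ?n = Some R_Un")
    case True
    then show ?thesis using Kd_Un[OF kn cin] by blast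
  next
    case False
    then show ?thesis using Kd_pD[OF kn cin] by simp
  qed
  have H1: "\<forall>m. below m (p @ [i]) \<longrightarrow> valid t m \<and> (\<exists>E. nD t (p @ [i]) = nD t m @ E)"
  proof (intro allI impI)
    fix m assume "below m (p @ [i])"
    then have "below m p \<or> m = p" by (simp add: below_snoc)
    then show "valid t m \<and> (\<exists>E. nD t (p @ [i]) = nD t m @ E)"
    proof
      assume "below m p"
      then obtain E where "valid t m" "nD t p = nD t m @ E" using G1 by blast
      then show ?thesis using E0 cX nX by auto
    next
      assume "m = p"
      then show ?thesis using E0 cX nX v(1) by auto
    qed
  qed
  have H2: "\<forall>m. below m (p @ [i]) \<longrightarrow> nR t m = Some R_Un \<longrightarrow> (\<exists>U. nF t m = PVar U \<and> U \<in> fst ` set (pD ?c))"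
  proof (intro allI impI)
    fix m assume b: "below m (p @ [i])" and r: "nR t m = Some R_Un"
    then have "below m p \<or> m = p" by (simp add: below_snoc)
    then show "\<exists>U. nF t m = PVar U \<and> U \<in> fst ` set (pD ?c)"
    proof
      assume "below m p"
      then show ?thesis using G2 r dom_sub by blast
    next
      assume mp: "m = p"
      then have "tR ?n = Some R_Un" using r nX by simp
      from Kd_Un[OF kn cin this] show ?thesis using mp nX by auto
    qed
  qed
  have H3: "\<forall>U \<in> fst ` set (pD ?c). \<exists>m. below m (p @ [i]) \<and> valid t m \<and> nF t m = PVar U \<and> nR t m = Some R_Un \<and>
        nS t m = Aset T V (nD t m) U"
  proof
    fix U assume U: "U \<in> fst ` set (pD ?c)"
    show "\<exists>m. below m (p @ [i]) \<and> valid t m \<and> nF t m = PVar U \<and> nR t m = Some R_Un \<and>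
        nS t m = Aset T V (nD t m) U"
    proof (cases "tR ?n = Some R_Un")
      case True
      from Kd_Un[OF kn cin True] obtain U0 where U0: "tF ?n = PVar U0"
        "fst ` set (pD ?c) = insert U0 (fst ` set (pD ?n))" "tS ?n = Aset T V (tD ?n) U0" by blast
      show ?thesis
      proof (cases "U = U0")
        case True
        have "below p (p @ [i])" unfolding below_def by simp
        then show ?thesis using True U0 nX v(1) \<open>tR ?n = Some R_Un\<close> by auto
      next
        case False
        then have "U \<in> fst ` set (pD ?n)" using U U0(2) by blast
        then show ?thesis using G3 below_snoc by blast
      qed
    next
      case False
      then have "U \<in> fst ` set (pD ?n)" using U Kd_pD[OF kn cin] by simp
      then show ?thesis using G3 below_snoc by blast
    qed
  qed
  have H4: "\<forall>m m'. below m (p @ [i]) \<longrightarrow> below m' (p @ [i]) \<longrightarrow> nR t m = Some R_Un \<longrightarrow> nR t m' = Some R_Un \<longrightarrow>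
        nF t m = nF t m' \<longrightarrow> m = m'"
  proof -
    have one: "m' = p" if b: "below m' p" and r: "nR t m' = Some R_Un" and rp: "nR t p = Some R_Un"
       and f: "nF t p = nF t m'" for m'
    proof -
      have rn: "tR ?n = Some R_Un" using rp nX by simp
      from Kd_Un[OF kn cin rn] obtain U0 where U0: "tF ?n = PVar U0" "U0 \<notin> fst ` set (pD ?n)" by blast
      from G2 b r obtain U where "nF t m' = PVar U" "U \<in> fst ` set (pD ?n)" by blast
      then show ?thesis using U0 f nX by simp
    qed
    show ?thesis
    proof (intro allI impI)
      fix m m' assume b: "below m (p @ [i])" "below m' (p @ [i])" and r: "nR t m = Some R_Un" "nR t m' = Some R_Un"
        and f: "nF t m = nF t m'"
      have "below m p \<or> m = p" "below m' p \<or> m' = p" using b by (simp_all add: below_snoc)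
      then show "m = m'"
      proof (elim disjE)
        assume "below m p" "below m' p" then show ?thesis using G4 r f by blast
      next
        assume "below m p" "m' = p" then show ?thesis using one[of m] r f by auto
      next
        assume "m = p" "below m' p" then show ?thesis using one[of m'] r f by auto
      next
        assume "m = p" "m' = p" then show ?thesis by simp
      qed
    qed
  qed
  show ?case unfolding G_def using H1 H2 H3 H4 by blast
qed




definition sigP :: "('s, 'a) tts \<Rightarrow> (nat \<Rightarrow> 's set) \<Rightarrow> ('s, 'a) tab \<Rightarrow> nat list \<Rightarrow> 's \<Rightarrow> 's set list" where
  "sigP T V t p s = sigN T V (nd t p) s"

lemma sigP_len[simp]: "length (sigP T V t p s) = length (nD t p)"
  unfolding sigP_def sigN_def nD_def by simp

lemma L_step:
  assumes tts: "is_TTS T" and k: "Kd T V t" and ts: "tstep T t n i s' s"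
  shows "LE (take (length (nD t n)) (sigP T V t (n @ [i]) s')) (sigP T V t n s) \<and>
    (isMu (nd t n) \<longrightarrow> LL (take (length (nD t n)) (sigP T V t (n @ [i]) s')) (sigP T V t n s)) \<and>
    (\<exists>E. nD t (n @ [i]) = nD t n @ E)"
proof -
  have v: "valid t (n @ [i])" and s': "s' \<in> nS t (n @ [i])" and s: "s \<in> nS t n"
    using ts unfolding tstep_def by auto
  have r: "steprel T (nd t n) i s' s"
    using ts unfolding tstep_def steprel_def nR_def nF_def by simp
  note vs = valid_snoc[OF v]
  have kn: "Kd T V (nd t n)" by (rule Kd_all[OF tts k vs(1)])
  have i: "i < length (tC (nd t n))" using vs(2) unfolding nC_def by simp
  have c: "nd t (n @ [i]) = tC (nd t n) ! i" using vs(3) unfolding nC_def by simp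
  have s1: "s \<in> tS (nd t n)" using s unfolding nS_def by simp
  have s2: "s' \<in> tS (tC (nd t n) ! i)" using s' c unfolding nS_def by simp
  have "tC (nd t n) ! i \<in> set (tC (nd t n))" using i by simp
  from Kd_prefix[OF kn this] have "\<exists>E. nD t (n @ [i]) = nD t n @ E" using c unfolding nD_def by simp
  moreover note step_local[OF tts kn i s1 s2 r]
  ultimately show ?thesis unfolding sigP_def c nD_def by simp
qed

lemma take_take_le: "a \<le> b \<Longrightarrow> take a (take b xs) = take a xs"
  by (simp add: min_absorb1)

lemma L_trace:
  assumes tts: "is_TTS T" and k: "Kd T V t"
  shows "ttrace T t n' n s' s \<Longrightarrow> (\<exists>q. n' = n @ q) \<and> (\<exists>E. nD t n' = nD t n @ E) \<and>
    LE (take (length (nD t n)) (sigP T V t n' s')) (sigP T V t n s) \<and>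
    (n' \<noteq> n \<longrightarrow> isMu (nd t n) \<longrightarrow> LL (take (length (nD t n)) (sigP T V t n' s')) (sigP T V t n s))"
proof (induction rule: ttrace.induct)
  case (refl n s)
  then show ?case by simp
next
  case (step n' n i s' s'' s)
  obtain q where q: "n' = (n @ [i]) @ q" using step.IH by blast
  obtain E1 where E1: "nD t n' = nD t (n @ [i]) @ E1" using step.IH by blast
  have le1: "LE (take (length (nD t (n @ [i]))) (sigP T V t n' s')) (sigP T V t (n @ [i]) s'')"
    using step.IH by blast
  note ls = L_step[OF tts k step.hyps(2)]
  obtain E2 where E2: "nD t (n @ [i]) = nD t n @ E2" using ls by blast
  have lenle: "length (nD t n) \<le> length (nD t (n @ [i]))" using E2 by simp
  have "LE (take (length (nD t n)) (take (length (nD t (n @ [i]))) (sigP T V t n' s')))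
            (take (length (nD t n)) (sigP T V t (n @ [i]) s''))"
    by (rule lexle_take[OF le1])
  then have le2: "LE (take (length (nD t n)) (sigP T V t n' s')) (take (length (nD t n)) (sigP T V t (n @ [i]) s''))"
    using lenle by (simp add: min_absorb1)
  have r1: "LE (take (length (nD t n)) (sigP T V t n' s')) (sigP T V t n s)"
    using le2 ls LE_trans by blast
  have r2: "isMu (nd t n) \<longrightarrow> LL (take (length (nD t n)) (sigP T V t n' s')) (sigP T V t n s)"
    using le2 ls LE_LL_trans by blast
  show ?case using q E1 E2 r1 r2 by auto
qed

lemma Kd_Un_form:
  assumes "Kd T V n" "tR n = Some R_Un"
  shows "\<exists>U. tF n = PVar U"
  using assms(1)
proof (cases rule: Kd_cases)
  case (B S D \<Phi>)
  then show ?thesis using assms(2) tR_build[of T V S D \<Phi>] by simp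
next
  case (F S D \<Phi> Z \<psi>)
  then show ?thesis using assms(2) by simp
next
  case (U D \<Phi> Z \<psi>)
  then show ?thesis by simp
qed

lemma L_cmctr:
  assumes tts: "is_TTS T" and k: "Kd T V t"
  shows "cm T t m s' s \<Longrightarrow> LE (sigP T V t m s') (sigP T V t m s) \<and>
            (isMu (nd t m) \<longrightarrow> LL (sigP T V t m s') (sigP T V t m s))"
    and "ctr T t n' n s' s \<Longrightarrow> (\<exists>q. n' = n @ q) \<and> (\<exists>E. nD t n' = nD t n @ E) \<and>
    LE (take (length (nD t n)) (sigP T V t n' s')) (sigP T V t n s) \<and>
    (n' \<noteq> n \<longrightarrow> isMu (nd t n) \<longrightarrow> LL (take (length (nD t n)) (sigP T V t n' s')) (sigP T V t n s))"
proof (induction rule: cm_ctr.inducts)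
  case (cm_intro m m' s' s)
  have cn: "valid t m" "nR t m = Some R_Un" using cm_intro(1) unfolding comp_node_def by auto
  have cl: "is_leaf t m'" "below m m'" "nF t m' = nF t m" "nS t m' \<subseteq> nS t m"
    using cm_intro(2) by (simp_all add: comp_leaf.simps[of t m m'])
  have km: "Kd T V (nd t m)" by (rule Kd_all[OF tts k cn(1)])
  have vm': "valid t m'" using cl(1) unfolding is_leaf_def by simp
  have km': "Kd T V (nd t m')" by (rule Kd_all[OF tts k vm'])
  have rm: "tR (nd t m) = Some R_Un" using cn(2) unfolding nR_def by simp
  obtain U where U: "tF (nd t m) = PVar U" using Kd_Un_form[OF km rm] by blast
  have Ud: "U \<in> fst ` set (tD (nd t m))" using Kd_Un_map[OF km rm U] by blast
  obtain E where E: "nD t m' = nD t m @ E" using cm_intro(5) by blast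
  have dist: "distinct (map fst (nD t m @ E))" using Kd_distinct[OF km'] E unfolding nD_def by simp
  have tk: "take (length (nD t m)) (sigP T V t m' s') = sigP T V t m s'"
    using sig_ext[of U "nD t m" E T V s'] Ud dist E cl(3) U
    unfolding sigP_def sigN_def nD_def nF_def by simp
  have ne: "m' \<noteq> m" using below_neq[OF cl(2)] by simp
  show ?case using cm_intro(5) ne unfolding tk by blast
next
  case (ctr_trace n' n s' s)
  then show ?case using L_trace[OF tts k] by blast
next
  case (ctr_comp n' n s' s m u u')
  have tr: "(\<exists>q. m = n @ q) \<and> (\<exists>E. nD t m = nD t n @ E) \<and>
    LE (take (length (nD t n)) (sigP T V t m u)) (sigP T V t n s) \<and>
    (m \<noteq> n \<longrightarrow> isMu (nd t n) \<longrightarrow> LL (take (length (nD t n)) (sigP T V t m u)) (sigP T V t n s))"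
    using L_trace[OF tts k ctr_comp(11)] .
  have ih: "(\<exists>q. n' = m @ q) \<and> (\<exists>E. nD t n' = nD t m @ E) \<and>
    LE (take (length (nD t m)) (sigP T V t n' s')) (sigP T V t m u')"
    using ctr_comp(9) by blast
  have tc: "LE (sigP T V t m u') (sigP T V t m u)"
    using ctr_comp(10)
  proof (induction rule: tranclp_induct)
    case (base y) then show ?case by blast
  next
    case (step y z) then show ?case using LE_trans by blast
  qed
  obtain q where q: "m = n @ q" using tr by blast
  obtain q' where q': "n' = m @ q'" using ih by blast
  obtain E1 where E1: "nD t m = nD t n @ E1" using tr by blast
  obtain E2 where E2: "nD t n' = nD t m @ E2" using ih by blast
  have lenle: "length (nD t n) \<le> length (nD t m)" using E1 by simp
  have a1: "LE (take (length (nD t n)) (sigP T V t n' s')) (take (length (nD t n)) (sigP T V t m u'))"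
    using lexle_take[of Rw _ _ "length (nD t n)", OF ih[THEN conjunct2, THEN conjunct2]] lenle
    by (simp add: min_absorb1)
  have a2: "LE (take (length (nD t n)) (sigP T V t m u')) (take (length (nD t n)) (sigP T V t m u))"
    by (rule lexle_take[OF tc])
  have a12: "LE (take (length (nD t n)) (sigP T V t n' s')) (take (length (nD t n)) (sigP T V t m u))"
    using a1 a2 LE_trans by blast
  have r1: "LE (take (length (nD t n)) (sigP T V t n' s')) (sigP T V t n s)"
    using a12 tr LE_trans by blast
  have r2: "isMu (nd t n) \<longrightarrow> LL (take (length (nD t n)) (sigP T V t n' s')) (sigP T V t n s)"
    using a12 tr ctr_comp(12) LE_LL_trans by blast
  show ?case using q q' E1 E2 r1 r2 by auto
qed

lemma wf_cm:
  assumes tts: "is_TTS T" and k: "Kd T V t" and mu: "isMu (nd t m)"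
  shows "wfP (cm T t m)"
proof -
  have "{(x, y). cm T t m x y} \<subseteq> inv_image {(a, b). LL a b} (sigP T V t m)"
    using L_cmctr(1)[OF tts k] mu by auto
  then have "wf {(x, y). cm T t m x y}" using wf_subset[OF wf_inv_image[OF LL_wf]] by blast
  then show ?thesis unfolding wfp_def .
qed




lemma leaf_anc:
  assumes tts: "is_TTS T" and k: "Kd T V t" and root: "pD t = []"
    and v: "valid t p" and leaf: "nC t p = []" and f: "nF t p = PVar U" and U: "U \<in> fst ` set (nD t p)"
  shows "\<exists>m. below m p \<and> valid t m \<and> nF t m = PVar U \<and> nR t m = Some R_Un \<and> nS t p \<subseteq> nS t m \<and>
           map_of (nD t m) U = map_of (nD t p) U"
proof -
  have kp: "Kd T V (nd t p)" by (rule Kd_all[OF tts k v])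
  have lf: "tR (nd t p) = None \<and> (\<exists>Z. tF (nd t p) = PVar Z \<or> tF (nd t p) = PNegVar Z) \<and>
      good T V (tS (nd t p)) (tD (nd t p)) (tF (nd t p))"
    using Kd_leaf[OF kp] leaf unfolding nC_def by simp
  have pd: "pD (nd t p) = nD t p" using lf unfolding pD_def nD_def by simp
  have Gp: "G T V t p" by (rule G_all[OF tts k root v])
  obtain m where m: "below m p" "valid t m" "nF t m = PVar U" "nR t m = Some R_Un" "nS t m = Aset T V (nD t m) U"
    using Gp U pd unfolding G_def by metis
  obtain E where E: "nD t p = nD t m @ E" using Gp m(1) unfolding G_def by blast
  have km: "Kd T V (nd t m)" by (rule Kd_all[OF tts k m(2)])
  have Um: "map_of (tD (nd t m)) U \<noteq> None \<and> U \<in> fst ` set (tD (nd t m))"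
    using Kd_Un_map[OF km] m(3,4) unfolding nR_def nF_def by simp
  have dist: "distinct (map fst (nD t m @ E))" using Kd_distinct[OF kp] E unfolding nD_def by simp
  have A: "Aset T V (nD t m @ E) U = Aset T V (nD t m) U"
    by (rule Aset_ext) (use Um dist in \<open>simp_all add: nD_def\<close>)
  have "nS t p \<subseteq> Aset T V (nD t p) U"
  proof
    fix s assume "s \<in> nS t p"
    then have "\<exists>\<tau>. sat T V (nD t p) (nF t p) \<tau> s" using lf unfolding good_def nS_def nD_def nF_def by blast
    then show "s \<in> Aset T V (nD t p) U" using f unfolding Aset_def by simp
  qed
  then have sub: "nS t p \<subseteq> nS t m" using A E m(5) by simp
  have "map_of (nD t p) U = map_of (nD t m) U"
    using E Um unfolding nD_def by (auto simp: map_of_append split: option.splits)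
  then show ?thesis using m sub by metis
qed

theorem theorem7:
  fixes T :: "('s, 'a) tts" and V :: "nat \<Rightarrow> 's set" and S :: "'s set" and \<Phi> :: "'a pform"
  assumes "is_TTS T"
    and "wf_cform (to_core \<Phi>)"
    and "S \<subseteq> sem T V (to_core \<Phi>)"
  shows "\<exists>t. is_tableau T t \<and> seq_of t = (S, [], \<Phi>) \<and> successful T V t"
proof -
  note tts = assms(1)
  define t where "t = build T V S [] \<Phi>"
  have g: "good T V S [] \<Phi>"
  proof (rule goodI)
    have "pwf \<Phi>" using assms(2) wf_to_core by metis
    then show "gdl [] \<Phi>" unfolding gdl_def wf_deflist_def by simp
    fix s assume "s \<in> S"
    then have "sat T V [] \<Phi> [] s" using assms(3) unfolding sat_def by auto
    then show "\<exists>\<tau>. sat T V [] \<Phi> \<tau> s" by blast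
  qed
  have k: "Kd T V t" unfolding t_def by (rule Kd_buildI[OF g])
  have root: "pD t = []" unfolding t_def by simp
  have nX: "nD t p = tD (nd t p)" "nF t p = tF (nd t p)" "nS t p = tS (nd t p)" "nR t p = tR (nd t p)"
    "nC t p = tC (nd t p)" for p
    unfolding nD_def nF_def nS_def nR_def nC_def by simp_all
  have leafinfo: "tR (nd t p) = None \<and> (\<exists>Z. tF (nd t p) = PVar Z \<or> tF (nd t p) = PNegVar Z) \<and>
      good T V (tS (nd t p)) (tD (nd t p)) (tF (nd t p))" if "valid t p" "nC t p = []" for p
    using Kd_leaf[OF Kd_all[OF tts k that(1)]] that(2) nX by simp
  have negleaf: "Z \<notin> fst ` set (nD t p)" if "valid t p" "nC t p = []" "nF t p = PNegVar Z" for p Z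
    using leafinfo[OF that(1,2)] that(3) nX unfolding good_def gdl_def by auto
  have tab: "is_tableau T t"
    unfolding is_tableau_def
  proof (intro conjI allI impI)
    show "tD t = []" unfolding t_def by simp
  next
    fix p assume v: "valid t p"
    have kp: "Kd T V (nd t p)" by (rule Kd_all[OF tts k v])
    show "wf_sequent (nD t p) (nF t p)" using Kd_wf_sequent[OF kp] nX by simp
    show "if nC t p = [] then nR t p = None \<and> terminal T t p
        else \<exists>r. nR t p = Some r \<and> rule_ok T r (nS t p) (nD t p) (nF t p) (map seq_of (nC t p))"
    proof (cases "nC t p = []")
      case True
      have li: "tR (nd t p) = None" "\<exists>Z. tF (nd t p) = PVar Z \<or> tF (nd t p) = PNegVar Z"
        using leafinfo[OF v True] by auto
      have "terminal T t p"
      proof -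
        obtain Z where Z: "nF t p = PVar Z \<or> nF t p = PNegVar Z" using li(2) nX by auto
        show ?thesis
        proof (cases "Z \<in> fst ` set (nD t p)")
          case False
          then show ?thesis using Z unfolding terminal_def by blast
        next
          case True
          then have "nF t p = PVar Z" using Z negleaf[OF v \<open>nC t p = []\<close>] by blast
          moreover obtain m where "below m p" "nF t m = PVar Z" "nS t p \<subseteq> nS t m"
            using leaf_anc[OF tts k root v \<open>nC t p = []\<close> _ True] calculation by blast
          ultimately show ?thesis using True unfolding terminal_def by blast
        qed
      qed
      then show ?thesis using True li(1) nX by simp
    next
      case False
      then show ?thesis using Kd_rule_ok[OF tts kp] nX by simp
    qed
  qed
  have succ: "successful T V t"
    unfolding successful_def
  proof (intro allI impI)
    fix n assume lf: "is_leaf t n"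
    have v: "valid t n" and c: "nC t n = []" using lf unfolding is_leaf_def by auto
    note li = leafinfo[OF v c]
    have gd: "good T V (nS t n) (nD t n) (nF t n)" using li nX by simp
    obtain Z where Z: "nF t n = PVar Z \<or> nF t n = PNegVar Z" using li nX by auto
    show "successful_leaf T V t n"
    proof (cases "Z \<in> fst ` set (nD t n)")
      case False
      have vZ: "valf T V (nD t n) \<tau> Z = V Z" for \<tau> using valf_other[OF False] .
      from Z show ?thesis
      proof
        assume f: "nF t n = PVar Z"
        have "nS t n \<subseteq> V Z"
        proof
          fix s assume "s \<in> nS t n"
          then obtain \<tau> where "sat T V (nD t n) (nF t n) \<tau> s" using gd unfolding good_def by blast
          then show "s \<in> V Z" using f vZ unfolding sat_def by simp
        qed
        then show ?thesis using f False unfolding successful_leaf_def by blast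
      next
        assume f: "nF t n = PNegVar Z"
        have "nS t n \<inter> V Z = {}"
        proof (rule equals0I)
          fix s assume "s \<in> nS t n \<inter> V Z"
          then obtain \<tau> where "sat T V (nD t n) (nF t n) \<tau> s" "s \<in> V Z" using gd unfolding good_def by blast
          then show False using f vZ unfolding sat_def by simp
        qed
        then show ?thesis using f False unfolding successful_leaf_def by blast
      qed
    next
      case True
      have f: "nF t n = PVar Z" using Z negleaf[OF v c] True by blast
      obtain m where m: "below m n" "valid t m" "nF t m = PVar Z" "nR t m = Some R_Un" "nS t n \<subseteq> nS t m"
        "map_of (nD t m) Z = map_of (nD t n) Z"
        using leaf_anc[OF tts k root v c f True] by blast
      obtain \<phi> where ph: "map_of (nD t n) Z = Some \<phi>" using True by (metis map_of_eq_None_iff not_Some_eq)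
      have "isfix \<phi>" using gd map_of_SomeD[OF ph] unfolding good_def gdl_def by force
      then obtain Y \<psi> where Y: "\<phi> = PNu Y \<psi> \<or> \<phi> = PMu Y \<psi>" unfolding isfix_def by blast
      from Y show ?thesis
      proof
        assume "\<phi> = PNu Y \<psi>"
        then show ?thesis using f ph unfolding successful_leaf_def by blast
      next
        assume mu: "\<phi> = PMu Y \<psi>"
        have cn: "comp_node t m" unfolding comp_node_def using m by simp
        have cl: "comp_leaf t m n"
        proof -
          have no: "\<not> (\<exists>m'. if below m m' \<and> below m' n then comp_node t m' \<and> comp_leaf t m' n else False)"
          proof
            assume "\<exists>m'. if below m m' \<and> below m' n then comp_node t m' \<and> comp_leaf t m' n else False"
            then obtain m' where b: "below m m'" "below m' n" and cn': "comp_node t m'" and cl': "comp_leaf t m' n"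
              by (metis (full_types))
            have "nF t n = nF t m'" using cl' by (simp add: comp_leaf.simps[of t m' n])
            moreover have "nR t m' = Some R_Un" using cn' unfolding comp_node_def by simp
            moreover have "G T V t n" by (rule G_all[OF tts k root v])
            ultimately have "m = m'" using m b f unfolding G_def by metis
            then show False using below_neq[OF b(1)] by simp
          qed
          show ?thesis
            by (subst comp_leaf.simps) (use lf m f no in auto)
        qed
        have "isMu (nd t m)" unfolding isMu_def using m ph mu nX by simp
        then have "wfP (cm T t m)" by (rule wf_cm[OF tts k])
        then show ?thesis using f ph mu cn cl unfolding successful_leaf_def by blast
      qed
    qed
  qed
  have "seq_of t = (S, [], \<Phi>)" unfolding t_def by simp
  then show ?thesis using tab succ by blast
qed



end
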